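(* Let $\gamma$ be an $n\times m$ integer matrix satisfying conditions (i) and (ii), and let $S^\pm=\{g\in\mathbb{Z}^m\mid \mathcal{A}(\gamma)^\pm_g\neq0\}$ be the graded support of $\mathcal{A}(\gamma)^\pm$. Regarding $\gamma$ as the $\mathbb{Z}$-linear map $\mathbb{Z}^m\to\mathbb{Z}^n$, we have $\gamma(S^+)\subseteq\{-1,0,1\}^p\times\mathbb{Z}^q$ and $\gamma(S^-)\subseteq\mathbb{Z}^p\times\{-1,0,1\}^q$.
   Context: $\Bbbk$ is an algebraically closed field of characteristic $0$. Fix $p,q\ge0$, $n=p+q$, a sign $\pm$, $\mp=-\pm$; $p(i)=0$ for $i\le p$, $p(i)=1$ for $i>p$. $\lambda_{ij}=\mp(-1)^{p(i)p(j)}$; $R=R^\pm_{p|q}=\Bbbk[u_1,\dots,u_n]/(u_i^2-u_i\mid\lambda_{ii}=-1)$; $\tau_i\in\mathrm{Aut}(R)$ with $\tau_i(u_i)=\lambda_{ii}(u_i-1)$, $\tau_i(u_j)=u_j$ ($j\ne i$). TGW algebras: for a TGW datum $(R,\sigma,t)$ (commuting automorphisms $\sigma_i$, central $t_i$) and nonzero scalars $\mu_{ij}$ ($i\ne j$), $\mathcal{A}_\mu(R,\sigma,t)$ is the quotient of the $R$-ring generated by $X_i,Y_i$ with relations $X_ir=\sigma_i(r)X_i$, $Y_ir=\sigma_i^{-1}(r)Y_i$, $Y_iX_i=t_i$, $X_iY_i=\sigma_i(t_i)$, $X_iY_j=\mu_{ij}Y_jX_i$ ($i\ne j$), graded by $\deg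 X_i=\mathbf{e}_i=-\deg Y_i$, $\deg R=0$, by the largest graded ideal meeting the degree-zero part trivially. The family $\mathcal{A}(\gamma)^\pm$: $\gamma=(\gamma_{ji})$ is an $n\times m$ integer matrix with (i) $|\gamma_{ji}|\le1$ whenever $\lambda_{jj}=-1$, and (ii) for all $i\ne i'$, either $\gamma_{ki}\gamma_{ki'}<0$ for some $k$ with $\lambda_{kk}=-1$, or $\gamma_{ki}\gamma_{ki'}\le0$ for all $k$. Then $\mathcal{A}(\gamma)^\pm=\mathcal{A}_\mu(R,\sigma,t)$ with index set $\{1,\dots,m\}$, $\sigma_i=\tau_1^{\gamma_{1i}}\cdots\tau_n^{\gamma_{ni}}$, $t_i=\prod_{j=1}^nu_{ji}$ with $u_{ji}=(u_j+\gamma_{ji}-1)\cdots(u_j+1)u_j$ if $\gamma_{ji}>0$, $1$ if $\gamma_{ji}=0$, $(u_j-|\gamma_{ji}|)\cdots(u_j-1)$ if $\gamma_{ji}<0$; and $\mu_{ij}=(\mp1)^{p'(i)p'(j)}(-1)^{\bar p(i)\bar p(j)}$ with $\bar p(i)=\sum_k\gamma_{ki}p(k)\bmod2$, $p'(i)=\sum_k\gamma_{ki}\bmod2$. *)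

theory Defs
  imports "HOL-Library.Poly_Mapping" "HOL-Computational_Algebra.Polynomial"
begin

text \<open>Generators of the free algebra: U j (the polynomial variable u_j of R),
  X i and Y i.  Indices j range over 1..n, i over 1..m.\<close>
datatype letter = U nat | X nat | Y nat

datatype 'a word = Word "'a list"

fun word_list :: "'a word \<Rightarrow> 'a list" where "word_list (Word xs) = xs"

instantiation word :: (type) monoid_add
begin
definition zero_word :: "'a word" where "zero_word = Word []"
definition plus_word :: "'a word \<Rightarrow> 'a word \<Rightarrow> 'a word" where
  "plus_word v w = Word (word_list v @ word_list w)"
instance
proof
  fix a b c :: "'a word"
  show "a + b + c = a + (b + c)" by (cases a; cases b; cases c) (simp add: plus_word_def)
  show "0 + a = a" by (cases a) (simp add: plus_word_def zero_word_def)
  show "a + 0 = a" by (cases a) (simp add: plus_word_def zero_word_def)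
qed
end

text \<open>The free associative \<Bbbk>-algebra on the letters: finitely supported
  functions from words to \<Bbbk>, with convolution product.\<close>
type_synonym 'k free_alg = "letter word \<Rightarrow>\<^sub>0 'k"

definition const :: "'k::ring_1 \<Rightarrow> 'k free_alg" where
  "const c = Poly_Mapping.single 0 c"

definition lt :: "letter \<Rightarrow> 'k::ring_1 free_alg" where
  "lt l = Poly_Mapping.single (Word [l]) 1"

definition valid_letter :: "nat \<Rightarrow> nat \<Rightarrow> letter \<Rightarrow> bool" where
  "valid_letter n m l = (case l of U j \<Rightarrow> 1 \<le> j \<and> j \<le> n
                                | X i \<Rightarrow> 1 \<le> i \<and> i \<le> m
                                | Y i \<Rightarrow> 1 \<le> i \<and> i \<le> m)"

definition Fset :: "nat \<Rightarrow> nat \<Rightarrow> ('k::ring_1) free_alg set" where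
  "Fset n m = {a. \<forall>w\<in>Poly_Mapping.keys a. \<forall>l\<in>set (word_list w). valid_letter n m l}"

text \<open>Elements of the free algebra on U 1..U n only (lifts of elements of R).\<close>
definition Rfree :: "nat \<Rightarrow> ('k::ring_1) free_alg set" where
  "Rfree n = {a. \<forall>w\<in>Poly_Mapping.keys a. \<forall>l\<in>set (word_list w). \<exists>j. l = U j \<and> 1 \<le> j \<and> j \<le> n}"

fun ldeg :: "letter \<Rightarrow> nat \<Rightarrow> int" where
  "ldeg (U j) = (\<lambda>k. 0)"
| "ldeg (X i) = (\<lambda>k. if k = i then 1 else 0)"
| "ldeg (Y i) = (\<lambda>k. if k = i then -1 else 0)"

definition wdeg :: "letter word \<Rightarrow> nat \<Rightarrow> int" where
  "wdeg w = (\<lambda>k. \<Sum>l\<leftarrow>word_list w. ldeg l k)"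

definition homog :: "(nat \<Rightarrow> int) \<Rightarrow> ('k::ring_1) free_alg \<Rightarrow> bool" where
  "homog g a = (\<forall>w\<in>Poly_Mapping.keys a. wdeg w = g)"

definition component :: "(nat \<Rightarrow> int) \<Rightarrow> ('k::ring_1) free_alg \<Rightarrow> 'k free_alg" where
  "component g a = (\<Sum>w\<in>{w\<in>Poly_Mapping.keys a. wdeg w = g}. Poly_Mapping.single w (Poly_Mapping.lookup a w))"

definition is_ideal :: "nat \<Rightarrow> nat \<Rightarrow> ('k::ring_1) free_alg set \<Rightarrow> bool" where
  "is_ideal n m K = (K \<subseteq> Fset n m \<and> 0 \<in> K \<and> (\<forall>a\<in>K. \<forall>b\<in>K. a + b \<in> K) \<and>
      (\<forall>a\<in>K. \<forall>x\<in>Fset n m. x * a \<in> K \<and> a * x \<in> K))"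

definition graded :: "('k::ring_1) free_alg set \<Rightarrow> bool" where
  "graded K = (\<forall>a\<in>K. \<forall>g. component g a \<in> K)"

inductive_set ideal_gen :: "nat \<Rightarrow> nat \<Rightarrow> ('k::ring_1) free_alg set \<Rightarrow> 'k free_alg set"
  for n m S where
  gen: "a \<in> S \<Longrightarrow> a \<in> ideal_gen n m S"
| zero: "0 \<in> ideal_gen n m S"
| add: "a \<in> ideal_gen n m S \<Longrightarrow> b \<in> ideal_gen n m S \<Longrightarrow> a + b \<in> ideal_gen n m S"
| mult: "a \<in> ideal_gen n m S \<Longrightarrow> x \<in> Fset n m \<Longrightarrow> y \<in> Fset n m \<Longrightarrow> x * a * y \<in> ideal_gen n m S"

definition wsubst :: "(letter \<Rightarrow> ('k::ring_1) free_alg) \<Rightarrow> letter word \<Rightarrow> 'k free_alg" where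
  "wsubst f w = prod_list (map f (word_list w))"

definition subst :: "(letter \<Rightarrow> ('k::ring_1) free_alg) \<Rightarrow> 'k free_alg \<Rightarrow> 'k free_alg" where
  "subst f a = (\<Sum>w\<in>Poly_Mapping.keys a. const (Poly_Mapping.lookup a w) * wsubst f w)"

text \<open>Parity p(i): 0 for i \<le> p, 1 for i > p.  The sign \<plusminus> is eps \<in> {1,-1}, \<mp> = -eps.\<close>
definition par :: "nat \<Rightarrow> nat \<Rightarrow> nat" where
  "par p i = (if i \<le> p then 0 else 1)"

definition lam :: "nat \<Rightarrow> int \<Rightarrow> nat \<Rightarrow> nat \<Rightarrow> int" where
  "lam p eps i j = (- eps) * (-1) ^ (par p i * par p j)"

text \<open>tau_j: u_j \<mapsto> lambda_jj (u_j - 1), other generators fixed; and its inverse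
  u_j \<mapsto> lambda_jj u_j + 1 (since lambda_jj^2 = 1).\<close>
definition tau :: "nat \<Rightarrow> int \<Rightarrow> nat \<Rightarrow> letter \<Rightarrow> ('k::ring_1) free_alg" where
  "tau p eps j l = (if l = U j then const (of_int (lam p eps j j)) * (lt (U j) - 1) else lt l)"

definition tau_inv :: "nat \<Rightarrow> int \<Rightarrow> nat \<Rightarrow> letter \<Rightarrow> ('k::ring_1) free_alg" where
  "tau_inv p eps j l = (if l = U j then const (of_int (lam p eps j j)) * lt (U j) + 1 else lt l)"

definition tau_pow :: "nat \<Rightarrow> int \<Rightarrow> nat \<Rightarrow> int \<Rightarrow> ('k::ring_1) free_alg \<Rightarrow> 'k free_alg" where
  "tau_pow p eps j k = (if 0 \<le> k then subst (tau p eps j) ^^ nat k else subst (tau_inv p eps j) ^^ nat (- k))"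

definition sigma :: "nat \<Rightarrow> nat \<Rightarrow> int \<Rightarrow> (nat \<Rightarrow> nat \<Rightarrow> int) \<Rightarrow> nat \<Rightarrow> ('k::ring_1) free_alg \<Rightarrow> 'k free_alg" where
  "sigma p q eps \<gamma> i = foldr (\<lambda>j f. tau_pow p eps j (\<gamma> j i) \<circ> f) [1..<p+q+1] id"

definition sigma_inv :: "nat \<Rightarrow> nat \<Rightarrow> int \<Rightarrow> (nat \<Rightarrow> nat \<Rightarrow> int) \<Rightarrow> nat \<Rightarrow> ('k::ring_1) free_alg \<Rightarrow> 'k free_alg" where
  "sigma_inv p q eps \<gamma> i = foldr (\<lambda>j f. tau_pow p eps j (- \<gamma> j i) \<circ> f) [1..<p+q+1] id"

definition u_fac :: "(nat \<Rightarrow> nat \<Rightarrow> int) \<Rightarrow> nat \<Rightarrow> nat \<Rightarrow> ('k::ring_1) free_alg" where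
  "u_fac \<gamma> j i =
     (if \<gamma> j i > 0 then prod_list (map (\<lambda>k. lt (U j) + of_nat k) [0..<nat (\<gamma> j i)])
      else if \<gamma> j i = 0 then 1
      else prod_list (map (\<lambda>k. lt (U j) - of_nat k) [1..<nat (- \<gamma> j i) + 1]))"

definition tt :: "nat \<Rightarrow> (nat \<Rightarrow> nat \<Rightarrow> int) \<Rightarrow> nat \<Rightarrow> ('k::ring_1) free_alg" where
  "tt n \<gamma> i = prod_list (map (\<lambda>j. u_fac \<gamma> j i) [1..<n+1])"

definition pbar :: "nat \<Rightarrow> nat \<Rightarrow> (nat \<Rightarrow> nat \<Rightarrow> int) \<Rightarrow> nat \<Rightarrow> nat" where
  "pbar p n \<gamma> i = nat ((\<Sum>k=1..n. \<gamma> k i * int (par p k)) mod 2)"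

definition pprime :: "nat \<Rightarrow> (nat \<Rightarrow> nat \<Rightarrow> int) \<Rightarrow> nat \<Rightarrow> nat" where
  "pprime n \<gamma> i = nat ((\<Sum>k=1..n. \<gamma> k i) mod 2)"

definition mu :: "nat \<Rightarrow> nat \<Rightarrow> int \<Rightarrow> (nat \<Rightarrow> nat \<Rightarrow> int) \<Rightarrow> nat \<Rightarrow> nat \<Rightarrow> int" where
  "mu p n eps \<gamma> i j = (- eps) ^ (pprime n \<gamma> i * pprime n \<gamma> j) * (-1) ^ (pbar p n \<gamma> i * pbar p n \<gamma> j)"

text \<open>Defining relations of the ring C (the R-ring generated by X_i, Y_i), written
  inside the free algebra: the relations of R (commutativity, u_j^2 = u_j when
  lambda_jj = -1) and the TGW relations.\<close>
definition rels :: "nat \<Rightarrow> nat \<Rightarrow> nat \<Rightarrow> int \<Rightarrow> (nat \<Rightarrow> nat \<Rightarrow> int) \<Rightarrow> ('k::ring_1) free_alg set" where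
  "rels p q m eps \<gamma> =
     {lt (U a) * lt (U b) - lt (U b) * lt (U a) | a b. 1 \<le> a \<and> a \<le> p+q \<and> 1 \<le> b \<and> b \<le> p+q}
   \<union> {lt (U j) * lt (U j) - lt (U j) | j. 1 \<le> j \<and> j \<le> p+q \<and> lam p eps j j = -1}
   \<union> {lt (X i) * r - sigma p q eps \<gamma> i r * lt (X i) | i r. 1 \<le> i \<and> i \<le> m \<and> r \<in> Rfree (p+q)}
   \<union> {lt (Y i) * r - sigma_inv p q eps \<gamma> i r * lt (Y i) | i r. 1 \<le> i \<and> i \<le> m \<and> r \<in> Rfree (p+q)}
   \<union> {lt (Y i) * lt (X i) - tt (p+q) \<gamma> i | i. 1 \<le> i \<and> i \<le> m}
   \<union> {lt (X i) * lt (Y i) - sigma p q eps \<gamma> i (tt (p+q) \<gamma> i) | i. 1 \<le> i \<and> i \<le> m}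
   \<union> {lt (X i) * lt (Y j) - const (of_int (mu p (p+q) eps \<gamma> i j)) * lt (Y j) * lt (X i)
        | i j. 1 \<le> i \<and> i \<le> m \<and> 1 \<le> j \<and> j \<le> m \<and> i \<noteq> j}"

text \<open>The ideal J of the free algebra with C = F / J.\<close>
definition Jrel :: "nat \<Rightarrow> nat \<Rightarrow> nat \<Rightarrow> int \<Rightarrow> (nat \<Rightarrow> nat \<Rightarrow> int) \<Rightarrow> ('k::ring_1) free_alg set" where
  "Jrel p q m eps \<gamma> = ideal_gen (p+q) m (rels p q m eps \<gamma>)"

text \<open>Preimage in F of the largest graded ideal I of C with I \<inter> C_0 = 0: the sum
  (= ideal generated by the union) of all graded ideals K of F containing J with
  K \<inter> F_0 \<subseteq> J.\<close>
definition Imax :: "nat \<Rightarrow> nat \<Rightarrow> nat \<Rightarrow> int \<Rightarrow> (nat \<Rightarrow> nat \<Rightarrow> int) \<Rightarrow> ('k::ring_1) free_alg set" where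
  "Imax p q m eps \<gamma> = ideal_gen (p+q) m
     (\<Union>{K. is_ideal (p+q) m K \<and> graded K \<and> Jrel p q m eps \<gamma> \<subseteq> K \<and>
           (\<forall>a\<in>K. homog (\<lambda>k. 0) a \<longrightarrow> a \<in> Jrel p q m eps \<gamma>)})"

text \<open>Graded support of A(gamma)^\<plusminus> = C / I: all g with A_g \<noteq> 0, i.e. some
  homogeneous element of degree g in F not in the preimage of I.\<close>
definition tgw_support :: "('k::ring_1) itself \<Rightarrow> nat \<Rightarrow> nat \<Rightarrow> nat \<Rightarrow> int \<Rightarrow> (nat \<Rightarrow> nat \<Rightarrow> int) \<Rightarrow> (nat \<Rightarrow> int) set" where
  "tgw_support (_::'k itself) p q m eps \<gamma> =
     {g. \<exists>a::'k free_alg. a \<in> Fset (p+q) m \<and> homog g a \<and> a \<notin> Imax p q m eps \<gamma>}"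

definition gamma_ok :: "nat \<Rightarrow> nat \<Rightarrow> nat \<Rightarrow> int \<Rightarrow> (nat \<Rightarrow> nat \<Rightarrow> int) \<Rightarrow> bool" where
  "gamma_ok p q m eps \<gamma> =
    ((\<forall>j i. 1 \<le> j \<and> j \<le> p+q \<and> 1 \<le> i \<and> i \<le> m \<and> lam p eps j j = -1 \<longrightarrow> \<bar>\<gamma> j i\<bar> \<le> 1) \<and>
     (\<forall>i i'. 1 \<le> i \<and> i \<le> m \<and> 1 \<le> i' \<and> i' \<le> m \<and> i \<noteq> i' \<longrightarrow>
        (\<exists>k. 1 \<le> k \<and> k \<le> p+q \<and> lam p eps k k = -1 \<and> \<gamma> k i * \<gamma> k i' < 0) \<or>
        (\<forall>k. 1 \<le> k \<and> k \<le> p+q \<longrightarrow> \<gamma> k i * \<gamma> k i' \<le> 0)))"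

end

theory Submission
  imports Defs
begin


definition mon :: "letter list \<Rightarrow> ('k::ring_1) free_alg" where
  "mon xs = Poly_Mapping.single (Word xs) 1"

lemma word_plus[simp]: "Word xs + Word ys = Word (xs @ ys)"
  by (simp add: plus_word_def)

lemma word_zero: "(0::'a word) = Word []"
  by (simp add: zero_word_def)

lemma word_list_plus[simp]: "word_list (v + w) = word_list v @ word_list w"
  by (cases v; cases w) simp

lemma Word_word_list[simp]: "Word (word_list w) = w"
  by (cases w) simp

lemma mon_Nil[simp]: "mon [] = 1"
proof -
  have "mon [] = Poly_Mapping.single 0 1" by (simp add: mon_def zero_word_def)
  thus ?thesis by simp
qed

lemma mon_append: "mon (xs @ ys) = (mon xs * mon ys :: ('k::ring_1) free_alg)"
  by (simp add: mon_def mult_single)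

lemma mon_Cons: "mon (x # xs) = (lt x * mon xs :: ('k::ring_1) free_alg)"
  using mon_append[of "[x]" xs] by (simp add: lt_def mon_def)

lemma lt_mon: "lt x = mon [x]"
  by (simp add: lt_def mon_def)

lemma const_0[simp]: "const 0 = 0" by (simp add: const_def)
lemma const_1[simp]: "const 1 = 1" by (simp add: const_def)
lemma const_add: "const (a + b) = const a + const b" by (simp add: const_def single_add)
lemma const_mult: "const (a * b) = const a * (const b :: ('k::ring_1) free_alg)"
  by (simp add: const_def mult_single)
lemma const_uminus: "const (- a) = - const a" by (simp add: const_def single_uminus)
lemma const_diff: "const (a - b) = const a - const b" by (simp add: const_def single_diff)

lemma lookup_const_mult:
  "Poly_Mapping.lookup (const c * x) w = c * Poly_Mapping.lookup (x :: ('k::ring_1) free_alg) w"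
  by (simp add: const_def mult_map_scale_conv_mult[symmetric] Poly_Mapping.map.rep_eq when_def)

lemma lookup_mult_const:
  "Poly_Mapping.lookup (x * const c) w = Poly_Mapping.lookup (x :: ('k::comm_ring_1) free_alg) w * c"
proof -
  have "Poly_Mapping.lookup (x * const c) w = (\<Sum>l. Poly_Mapping.lookup x l * (\<Sum>q. Poly_Mapping.lookup (const c) q when w = l + q))"
    by (simp add: lookup_mult)
  also have "\<dots> = (\<Sum>l. Poly_Mapping.lookup x l * (c when w = l))"
  proof (rule Sum_any.cong)
    fix l
    have "(\<lambda>q. Poly_Mapping.lookup (const c) q when w = l + q) = (\<lambda>q. (if q = 0 then (c when w = l) else 0))"
      by (auto simp: const_def lookup_single when_def)
    hence "(\<Sum>q. Poly_Mapping.lookup (const c) q when w = l + q) = (c when w = l)"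
      using Sum_any.delta[where a=0 and g="\<lambda>_. c when w = l"] by metis
    then show "Poly_Mapping.lookup x l * (Sum_any (\<lambda>q. Poly_Mapping.lookup (const c) q when w = l + q)) = Poly_Mapping.lookup x l * (c when w = l)" by simp
  qed
  also have "\<dots> = (\<Sum>l. if l = w then Poly_Mapping.lookup x l * c else 0)"
    by (rule arg_cong[where f=Sum_any]) (auto simp: when_def)
  also have "\<dots> = Poly_Mapping.lookup x w * c"
    by (rule Sum_any.delta)
  finally show ?thesis .
qed

lemma const_comm: "const c * x = x * (const c :: ('k::comm_ring_1) free_alg)"
  by (rule poly_mapping_eqI) (simp add: lookup_const_mult lookup_mult_const mult.commute)

lemma expansion:
  "x = (\<Sum>w\<in>Poly_Mapping.keys x. const (Poly_Mapping.lookup x w) * mon (word_list w) :: ('k::ring_1) free_alg)"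
proof (rule poly_mapping_eqI)
  fix k
  have "Poly_Mapping.lookup (\<Sum>w\<in>Poly_Mapping.keys x. const (Poly_Mapping.lookup x w) * mon (word_list w)) k
     = (\<Sum>w\<in>Poly_Mapping.keys x. Poly_Mapping.lookup x w * (1 when w = k))"
    by (simp add: lookup_sum lookup_const_mult mon_def lookup_single)
  also have "\<dots> = Poly_Mapping.lookup x k"
  proof -
    have "(\<Sum>w\<in>Poly_Mapping.keys x. Poly_Mapping.lookup x w * (1 when w = k)) = (\<Sum>w\<in>Poly_Mapping.keys x. if w = k then Poly_Mapping.lookup x w else 0)"
      by (rule sum.cong) (auto simp: when_def)
    also have "\<dots> = Poly_Mapping.lookup x k" by (simp add: sum.delta' in_keys_iff)
    finally show ?thesis .
  qed
  finally show "Poly_Mapping.lookup x k = Poly_Mapping.lookup (\<Sum>w\<in>Poly_Mapping.keys x. const (Poly_Mapping.lookup x w) * mon (word_list w)) k" ..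
qed

lemma keys_const_mult: "Poly_Mapping.keys (const c * x) \<subseteq> Poly_Mapping.keys (x :: ('k::ring_1) free_alg)"
  by (auto simp: in_keys_iff lookup_const_mult)

lemma keys_mon: "Poly_Mapping.keys (mon xs :: ('k::ring_1) free_alg) = {Word xs}"
  by (simp add: mon_def)




definition LS :: "(letter \<Rightarrow> bool) \<Rightarrow> ('k::ring_1) free_alg set" where
  "LS Q = {a. \<forall>w\<in>Poly_Mapping.keys a. \<forall>l\<in>set (word_list w). Q l}"

lemma Fset_LS: "Fset n m = LS (valid_letter n m)"
  by (simp add: Fset_def LS_def)

lemma Rfree_LS: "Rfree n = LS (\<lambda>l. \<exists>j. l = U j \<and> 1 \<le> j \<and> j \<le> n)"
  by (simp add: Rfree_def LS_def)

lemma LS_add: "a \<in> LS Q \<Longrightarrow> b \<in> LS Q \<Longrightarrow> a + b \<in> LS Q"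
  using keys_add[of a b] by (auto simp: LS_def)

lemma LS_uminus: "a \<in> LS Q \<Longrightarrow> - a \<in> LS Q"
  by (auto simp: LS_def)

lemma LS_diff: "a \<in> LS Q \<Longrightarrow> b \<in> LS Q \<Longrightarrow> a - b \<in> LS Q"
  using LS_add[of a Q "- b"] LS_uminus[of b Q] by simp

lemma LS_zero: "0 \<in> LS Q" by (simp add: LS_def)

lemma LS_mult: "a \<in> LS Q \<Longrightarrow> b \<in> LS Q \<Longrightarrow> a * b \<in> LS Q"
  using keys_mult[of a b] by (fastforce simp: LS_def)

lemma LS_one: "1 \<in> LS Q"
  by (simp add: LS_def zero_word_def)

lemma LS_const: "const c \<in> LS Q"
  by (simp add: LS_def const_def zero_word_def)

lemma LS_mon: "(\<forall>l\<in>set xs. Q l) \<Longrightarrow> mon xs \<in> LS Q"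
  by (simp add: LS_def keys_mon)

lemma LS_lt: "Q l \<Longrightarrow> lt l \<in> LS Q"
  by (simp add: lt_mon LS_mon)

lemma LS_sum: "(\<And>i. i \<in> I \<Longrightarrow> f i \<in> LS Q) \<Longrightarrow> sum f I \<in> LS Q"
  by (induction I rule: infinite_finite_induct) (auto intro: LS_add LS_zero)

lemma LS_prod_list: "(\<And>x. x \<in> set xs \<Longrightarrow> x \<in> LS Q) \<Longrightarrow> prod_list xs \<in> LS Q"
  by (induction xs) (auto intro: LS_mult LS_one)

lemma LS_mono: "(\<And>l. Q l \<Longrightarrow> Q' l) \<Longrightarrow> a \<in> LS Q \<Longrightarrow> a \<in> LS Q'"
  by (auto simp: LS_def)

lemma LS_keys_sub: "a \<in> LS Q \<Longrightarrow> Poly_Mapping.keys b \<subseteq> Poly_Mapping.keys a \<Longrightarrow> b \<in> LS Q"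
  by (auto simp: LS_def)

lemma LS_of_nat: "of_nat k \<in> LS Q"
  by (induction k) (auto intro: LS_add LS_one LS_zero)

lemma Rfree_Fset: "r \<in> Rfree (p+q) \<Longrightarrow> r \<in> Fset (p+q) m"
proof -
  assume "r \<in> Rfree (p+q)"
  thus ?thesis unfolding Rfree_LS Fset_LS
    by (rule LS_mono[rotated]) (auto simp: valid_letter_def)
qed

lemma ideal_gen_Fset: assumes "S \<subseteq> Fset n m" shows "a \<in> ideal_gen n m S \<Longrightarrow> a \<in> Fset n m"
proof (induction rule: ideal_gen.induct)
  case (mult a x y) thus ?case unfolding Fset_LS by (intro LS_mult)
qed (use assms in \<open>auto simp: Fset_LS intro: LS_add LS_zero\<close>)

context
  fixes n m :: nat and S :: "('k::comm_ring_1) free_alg set"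
begin

lemma ig_mult_left: "a \<in> ideal_gen n m S \<Longrightarrow> x \<in> Fset n m \<Longrightarrow> x * a \<in> ideal_gen n m S"
  using ideal_gen.mult[of a n m S x 1] by (simp add: Fset_LS LS_one)

lemma ig_mult_right: "a \<in> ideal_gen n m S \<Longrightarrow> y \<in> Fset n m \<Longrightarrow> a * y \<in> ideal_gen n m S"
  using ideal_gen.mult[of a n m S 1 y] by (simp add: Fset_LS LS_one)

lemma ig_const: "a \<in> ideal_gen n m S \<Longrightarrow> const c * a \<in> ideal_gen n m S"
  by (rule ig_mult_left) (simp_all add: Fset_LS LS_const)

lemma ig_uminus: "a \<in> ideal_gen n m S \<Longrightarrow> - a \<in> ideal_gen n m S"
  using ig_const[of a "-1"] by (simp add: const_uminus)

lemma ig_diff: "a \<in> ideal_gen n m S \<Longrightarrow> b \<in> ideal_gen n m S \<Longrightarrow> a - b \<in> ideal_gen n m S"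
  using ideal_gen.add[of a n m S "- b"] ig_uminus[of b] by simp

lemma ig_sum: "(\<And>i. i \<in> I \<Longrightarrow> f i \<in> ideal_gen n m S) \<Longrightarrow> sum f I \<in> ideal_gen n m S"
  by (induction I rule: infinite_finite_induct) (auto intro: ideal_gen.add ideal_gen.zero)

end




section \<open>Substitution is a ring homomorphism\<close>

definition ishom :: "(('k::comm_ring_1) free_alg \<Rightarrow> 'k free_alg) \<Rightarrow> bool" where
  "ishom h = ((\<forall>a b. h (a + b) = h a + h b) \<and> (\<forall>a b. h (a * b) = h a * h b) \<and> (\<forall>c. h (const c) = const c))"

lemma subst_superset:
  assumes "finite S" "Poly_Mapping.keys a \<subseteq> S"
  shows "subst f a = (\<Sum>w\<in>S. const (Poly_Mapping.lookup a w) * wsubst f w)"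
  unfolding subst_def
  by (rule sum.mono_neutral_left) (use assms in \<open>auto simp: in_keys_iff\<close>)

lemma subst_add: "subst f (a + b) = subst f a + subst f (b :: ('k::comm_ring_1) free_alg)"
proof -
  let ?S = "Poly_Mapping.keys a \<union> Poly_Mapping.keys b"
  have "subst f (a + b) = (\<Sum>w\<in>?S. const (Poly_Mapping.lookup (a+b) w) * wsubst f w)"
    by (rule subst_superset) (use keys_add[of a b] in auto)
  also have "\<dots> = (\<Sum>w\<in>?S. const (Poly_Mapping.lookup a w) * wsubst f w) + (\<Sum>w\<in>?S. const (Poly_Mapping.lookup b w) * wsubst f w)"
    by (simp add: lookup_add const_add distrib_right sum.distrib)
  also have "\<dots> = subst f a + subst f b"
    using subst_superset[of ?S a f] subst_superset[of ?S b f] by simp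
  finally show ?thesis .
qed

lemma subst_zero[simp]: "subst f 0 = 0"
  by (simp add: subst_def)

lemma subst_single: "subst f (Poly_Mapping.single w c) = (const c * wsubst f (w :: letter word) :: ('k::comm_ring_1) free_alg)"
  by (simp add: subst_def)

lemma wsubst_plus: "wsubst f (v + w) = wsubst f v * wsubst f w"
  by (simp add: wsubst_def)

lemma subst_sum: "subst f (sum g I) = (\<Sum>i\<in>I. subst f (g i :: ('k::comm_ring_1) free_alg))"
  by (induction I rule: infinite_finite_induct) (auto simp: subst_add)

lemma subst_const_mult_single:
  "subst f (Poly_Mapping.single v c * Poly_Mapping.single w d) = subst f (Poly_Mapping.single v c) * subst f (Poly_Mapping.single w (d :: 'k::comm_ring_1))"
proof -
  have "subst f (Poly_Mapping.single v c * Poly_Mapping.single w d) = const c * (const d * wsubst f v) * wsubst f w"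
    by (simp add: mult_single subst_single wsubst_plus const_mult mult.assoc)
  also have "\<dots> = const c * (wsubst f v * const d) * wsubst f w"
    by (simp add: const_comm)
  also have "\<dots> = subst f (Poly_Mapping.single v c) * subst f (Poly_Mapping.single w d)"
    by (simp add: subst_single mult.assoc)
  finally show ?thesis .
qed

lemma single_expansion:
  "(a :: ('k::ring_1) free_alg) = (\<Sum>w\<in>Poly_Mapping.keys a. Poly_Mapping.single w (Poly_Mapping.lookup a w))"
  using expansion[of a] by (simp add: const_def mon_def mult_single)

lemma subst_mult: "subst f (a * b) = subst f a * subst f (b :: ('k::comm_ring_1) free_alg)"
proof -
  let ?A = "Poly_Mapping.keys a" and ?B = "Poly_Mapping.keys b"
  let ?sa = "\<lambda>v. Poly_Mapping.single v (Poly_Mapping.lookup a v)"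
  let ?sb = "\<lambda>w. Poly_Mapping.single w (Poly_Mapping.lookup b w)"
  have "a * b = (\<Sum>v\<in>?A. ?sa v) * (\<Sum>w\<in>?B. ?sb w)"
    using single_expansion[of a] single_expansion[of b] by simp
  also have "\<dots> = (\<Sum>v\<in>?A. \<Sum>w\<in>?B. ?sa v * ?sb w)"
    by (rule sum_product)
  finally have "subst f (a * b) = (\<Sum>v\<in>?A. \<Sum>w\<in>?B. subst f (?sa v) * subst f (?sb w))"
    by (simp add: subst_sum subst_const_mult_single)
  also have "\<dots> = (\<Sum>v\<in>?A. subst f (?sa v)) * (\<Sum>w\<in>?B. subst f (?sb w))"
    by (rule sum_product[symmetric])
  also have "\<dots> = subst f a * subst f b"
    using single_expansion[of a] single_expansion[of b] by (simp add: subst_sum[symmetric])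
  finally show ?thesis .
qed

lemma subst_const: "subst f (const c) = (const c :: ('k::comm_ring_1) free_alg)"
  by (simp add: const_def subst_single wsubst_def zero_word_def)

lemma ishom_subst: "ishom (subst f :: ('k::comm_ring_1) free_alg \<Rightarrow> _)"
  by (simp add: ishom_def subst_add subst_mult subst_const)

lemma ishom_id: "ishom id" by (simp add: ishom_def)

lemma ishom_comp: "ishom g \<Longrightarrow> ishom h \<Longrightarrow> ishom (g \<circ> h)"
  by (simp add: ishom_def)

lemma ishom_funpow: "ishom h \<Longrightarrow> ishom (h ^^ k)"
  by (induction k) (auto simp: ishom_id ishom_comp)

context fixes h :: "('k::comm_ring_1) free_alg \<Rightarrow> 'k free_alg" assumes H: "ishom h"
begin
lemma hom_add: "h (a + b) = h a + h b" using H by (simp add: ishom_def)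
lemma hom_mult: "h (a * b) = h a * h b" using H by (simp add: ishom_def)
lemma hom_const: "h (const c) = const c" using H by (simp add: ishom_def)
lemma hom_one: "h 1 = 1" using hom_const[of 1] by simp
lemma hom_zero: "h 0 = 0" using hom_const[of 0] by simp
lemma hom_uminus: "h (- a) = - h a"
proof -
  have "h (- a) + h a = 0" using hom_add[of "- a" a] hom_zero by simp
  thus ?thesis by (metis add_diff_cancel_right' diff_0)
qed
lemma hom_diff: "h (a - b) = h a - h b"
  using hom_add[of a "- b"] hom_uminus[of b] by simp
lemma hom_prod_list: "h (prod_list xs) = prod_list (map h xs)"
  by (induction xs) (auto simp: hom_one hom_mult)
lemma hom_of_nat: "h (of_nat k) = of_nat k"
  by (induction k) (auto simp: hom_one hom_add hom_zero)
end

lemma subst_mon: "subst f (mon xs) = (prod_list (map f xs) :: ('k::comm_ring_1) free_alg)"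
  by (simp add: mon_def subst_single wsubst_def)

lemma subst_lt: "subst f (lt l) = (f l :: ('k::comm_ring_1) free_alg)"
  by (simp add: lt_mon subst_mon)

lemma subst_LS:
  assumes "\<And>l. Q l \<Longrightarrow> f l \<in> LS Q'" "a \<in> LS Q"
  shows "subst f a \<in> LS Q'"
  unfolding subst_def wsubst_def
proof (rule LS_sum)
  fix w assume w: "w \<in> Poly_Mapping.keys a"
  show "const (Poly_Mapping.lookup a w) * prod_list (map f (word_list w)) \<in> LS Q'"
  proof (intro LS_mult LS_const LS_prod_list)
    fix x assume "x \<in> set (map f (word_list w))"
    then obtain l where "l \<in> set (word_list w)" "x = f l" by auto
    moreover from this assms(2) w have "Q l" by (auto simp: LS_def)
    ultimately show "x \<in> LS Q'" using assms(1) by simp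
  qed
qed




lemma funpow_RF: fixes h :: "('k::comm_ring_1) free_alg \<Rightarrow> 'k free_alg" assumes "\<And>x. x \<in> Rfree n \<Longrightarrow> h x \<in> Rfree n" shows "r \<in> (Rfree n :: ('k::comm_ring_1) free_alg set) \<Longrightarrow> (h ^^ k) r \<in> Rfree n"
  by (induction k) (auto intro: assms)

lemma funpow_fix: "h x = x \<Longrightarrow> (h ^^ k) x = x"
  by (induction k) auto


locale tgw =
  fixes K :: "('k::field) itself"
  and p q m :: nat and eps :: int and \<gamma> :: "nat \<Rightarrow> nat \<Rightarrow> int"
  assumes eps: "eps = 1 \<or> eps = -1"
  and gok: "gamma_ok p q m eps \<gamma>"
begin

definition idem :: "nat \<Rightarrow> bool" where
  "idem k = (1 \<le> k \<and> k \<le> p+q \<and> lam p eps k k = -1)"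

lemma gamma_bound: "idem k \<Longrightarrow> 1 \<le> i \<Longrightarrow> i \<le> m \<Longrightarrow> \<bar>\<gamma> k i\<bar> \<le> 1"
  using gok by (auto simp: gamma_ok_def idem_def)

lemma gamma_cases: "idem k \<Longrightarrow> 1 \<le> i \<Longrightarrow> i \<le> m \<Longrightarrow> \<gamma> k i = 0 \<or> \<gamma> k i = 1 \<or> \<gamma> k i = -1"
  using gamma_bound[of k i] by auto

lemma lam_cases: "lam p eps j j = 1 \<or> lam p eps j j = -1"
  using eps by (auto simp: lam_def par_def)

abbreviation RF :: "'k free_alg set" where "RF \<equiv> Rfree (p+q)"
abbreviation FS :: "'k free_alg set" where "FS \<equiv> Fset (p+q) m"

lemma RF_lt: "1 \<le> j \<Longrightarrow> j \<le> p+q \<Longrightarrow> lt (U j) \<in> RF"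
  unfolding Rfree_LS by (rule LS_lt) auto

lemma tau_RF: "1 \<le> j \<Longrightarrow> j \<le> p+q \<Longrightarrow> (\<exists>l'. l = U l' \<and> 1 \<le> l' \<and> l' \<le> p+q) \<Longrightarrow> tau p eps j l \<in> RF"
  unfolding tau_def using RF_lt[of j] RF_lt
  by (auto simp: Rfree_LS intro!: LS_mult LS_const LS_diff LS_one)

lemma tau_inv_RF: "1 \<le> j \<Longrightarrow> j \<le> p+q \<Longrightarrow> (\<exists>l'. l = U l' \<and> 1 \<le> l' \<and> l' \<le> p+q) \<Longrightarrow> tau_inv p eps j l \<in> RF"
  unfolding tau_inv_def using RF_lt[of j] RF_lt
  by (auto simp: Rfree_LS intro!: LS_mult LS_const LS_add LS_one)

lemma subst_tau_RF: "1 \<le> j \<Longrightarrow> j \<le> p+q \<Longrightarrow> r \<in> RF \<Longrightarrow> subst (tau p eps j) r \<in> RF"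
  unfolding Rfree_LS by (rule subst_LS) (use tau_RF[of j] in \<open>auto simp: Rfree_LS\<close>)

lemma subst_tau_inv_RF: "1 \<le> j \<Longrightarrow> j \<le> p+q \<Longrightarrow> r \<in> RF \<Longrightarrow> subst (tau_inv p eps j) r \<in> RF"
  unfolding Rfree_LS by (rule subst_LS) (use tau_inv_RF[of j] in \<open>auto simp: Rfree_LS\<close>)


lemma tau_pow_RF: "1 \<le> j \<Longrightarrow> j \<le> p+q \<Longrightarrow> r \<in> RF \<Longrightarrow> tau_pow p eps j e r \<in> RF"
  unfolding tau_pow_def
  by (auto intro!: funpow_RF subst_tau_RF subst_tau_inv_RF)

lemma tau_pow_hom: "ishom (tau_pow p eps j e :: 'k free_alg \<Rightarrow> _)"
  unfolding tau_pow_def by (auto intro: ishom_funpow ishom_subst)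

lemma foldr_props:
  assumes "\<forall>j\<in>set js. 1 \<le> j \<and> j \<le> p+q"
  shows "ishom (foldr (\<lambda>j f. tau_pow p eps j (g j) \<circ> f) js id :: 'k free_alg \<Rightarrow> _)
     \<and> (\<forall>r\<in>(RF::'k free_alg set). foldr (\<lambda>j f. tau_pow p eps j (g j) \<circ> f) js id r \<in> RF)"
  using assms
  by (induction js) (auto simp: ishom_id intro!: ishom_comp tau_pow_hom tau_pow_RF)

lemma sigma_hom: "ishom (sigma p q eps \<gamma> i :: 'k free_alg \<Rightarrow> _)"
  unfolding sigma_def by (rule conjunct1[OF foldr_props]) auto

lemma sigma_inv_hom: "ishom (sigma_inv p q eps \<gamma> i :: 'k free_alg \<Rightarrow> _)"
  unfolding sigma_inv_def by (rule conjunct1[OF foldr_props]) auto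

lemma sigma_RF: "r \<in> RF \<Longrightarrow> sigma p q eps \<gamma> i r \<in> RF"
  unfolding sigma_def using foldr_props[of "[1..<p+q+1]" "\<lambda>j. \<gamma> j i"] by auto

lemma sigma_inv_RF: "r \<in> RF \<Longrightarrow> sigma_inv p q eps \<gamma> i r \<in> RF"
  unfolding sigma_inv_def using foldr_props[of "[1..<p+q+1]" "\<lambda>j. - \<gamma> j i"] by auto

lemma subst_tau_other: "j \<noteq> k \<Longrightarrow> subst (tau p eps j) (lt (U k)) = (lt (U k) :: 'k free_alg)"
  by (simp add: subst_lt tau_def)

lemma subst_tau_inv_other: "j \<noteq> k \<Longrightarrow> subst (tau_inv p eps j) (lt (U k)) = (lt (U k) :: 'k free_alg)"
  by (simp add: subst_lt tau_inv_def)

lemma tau_pow_other: "j \<noteq> k \<Longrightarrow> tau_pow p eps j e (lt (U k)) = (lt (U k) :: 'k free_alg)"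
  unfolding tau_pow_def by (auto intro!: funpow_fix subst_tau_other subst_tau_inv_other)

lemma tau_self: "idem k \<Longrightarrow> subst (tau p eps k) (lt (U k)) = (1 - lt (U k) :: 'k free_alg)"
  by (simp add: subst_lt tau_def idem_def const_uminus algebra_simps)

lemma tau_inv_self: "idem k \<Longrightarrow> subst (tau_inv p eps k) (lt (U k)) = (1 - lt (U k) :: 'k free_alg)"
  by (simp add: subst_lt tau_inv_def idem_def const_uminus algebra_simps)

lemma tau_pow_self: "idem k \<Longrightarrow> e = 0 \<or> e = 1 \<or> e = -1 \<Longrightarrow>
   tau_pow p eps k e (lt (U k)) = (if e = 0 then lt (U k) else 1 - lt (U k) :: 'k free_alg)"
  by (auto simp: tau_pow_def tau_self tau_inv_self)

lemma foldr_state: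
  assumes "distinct js" "idem k" "g k = 0 \<or> g k = 1 \<or> g k = -1"
  shows "foldr (\<lambda>j f. tau_pow p eps j (g j) \<circ> f) js id (lt (U k)) =
    (if k \<in> set js \<and> g k \<noteq> 0 then 1 - lt (U k) else (lt (U k) :: 'k free_alg))"
  using assms(1)
proof (induction js)
  case Nil thus ?case by simp
next
  case (Cons j js)
  show ?case
  proof (cases "j = k")
    case True
    with Cons have "k \<notin> set js" by auto
    with Cons True show ?thesis using tau_pow_self[OF assms(2,3)] by auto
  next
    case False
    have h: "ishom (tau_pow p eps j (g j) :: 'k free_alg \<Rightarrow> _)" by (rule tau_pow_hom)
    from Cons False show ?thesis
      by (auto simp: hom_diff[OF h] hom_one[OF h] tau_pow_other)
  qed
qed

lemma sigma_state: "idem k \<Longrightarrow> 1 \<le> i \<Longrightarrow> i \<le> m \<Longrightarrow>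
  sigma p q eps \<gamma> i (lt (U k)) = (if \<gamma> k i = 0 then lt (U k) else 1 - lt (U k) :: 'k free_alg)"
  unfolding sigma_def using gamma_cases[of k i]
  by (subst foldr_state) (auto simp: idem_def)

lemma sigma_inv_state: "idem k \<Longrightarrow> 1 \<le> i \<Longrightarrow> i \<le> m \<Longrightarrow>
  sigma_inv p q eps \<gamma> i (lt (U k)) = (if \<gamma> k i = 0 then lt (U k) else 1 - lt (U k) :: 'k free_alg)"
  unfolding sigma_inv_def using gamma_cases[of k i]
  by (subst foldr_state) (auto simp: idem_def)

end




context tgw begin

abbreviation JJ :: "'k free_alg set" where "JJ \<equiv> Jrel p q m eps \<gamma>"

lemma FS_lt: "valid_letter (p+q) m l \<Longrightarrow> lt l \<in> FS"
  unfolding Fset_LS by (rule LS_lt)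

lemma FS_ltU: "1 \<le> j \<Longrightarrow> j \<le> p+q \<Longrightarrow> lt (U j) \<in> FS"
  by (rule FS_lt) (simp add: valid_letter_def)
lemma FS_ltX: "1 \<le> i \<Longrightarrow> i \<le> m \<Longrightarrow> lt (X i) \<in> FS"
  by (rule FS_lt) (simp add: valid_letter_def)
lemma FS_ltY: "1 \<le> i \<Longrightarrow> i \<le> m \<Longrightarrow> lt (Y i) \<in> FS"
  by (rule FS_lt) (simp add: valid_letter_def)

lemma FS_add: "a \<in> FS \<Longrightarrow> b \<in> FS \<Longrightarrow> a + b \<in> FS" unfolding Fset_LS by (rule LS_add)
lemma FS_diff: "a \<in> FS \<Longrightarrow> b \<in> FS \<Longrightarrow> a - b \<in> FS" unfolding Fset_LS by (rule LS_diff)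
lemma FS_mult: "a \<in> FS \<Longrightarrow> b \<in> FS \<Longrightarrow> a * b \<in> FS" unfolding Fset_LS by (rule LS_mult)
lemma FS_const: "const c \<in> FS" unfolding Fset_LS by (rule LS_const)
lemma FS_one: "1 \<in> FS" unfolding Fset_LS by (rule LS_one)
lemma FS_RF: "r \<in> RF \<Longrightarrow> r \<in> FS" by (rule Rfree_Fset)

lemma RF_add: "a \<in> RF \<Longrightarrow> b \<in> RF \<Longrightarrow> a + b \<in> RF" unfolding Rfree_LS by (rule LS_add)
lemma RF_diff: "a \<in> RF \<Longrightarrow> b \<in> RF \<Longrightarrow> a - b \<in> RF" unfolding Rfree_LS by (rule LS_diff)
lemma RF_mult: "a \<in> RF \<Longrightarrow> b \<in> RF \<Longrightarrow> a * b \<in> RF" unfolding Rfree_LS by (rule LS_mult)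
lemma RF_const: "const c \<in> RF" unfolding Rfree_LS by (rule LS_const)
lemma RF_one: "1 \<in> RF" unfolding Rfree_LS by (rule LS_one)
lemma RF_uminus: "a \<in> RF \<Longrightarrow> - a \<in> RF" unfolding Rfree_LS by (rule LS_uminus)
lemma RF_of_nat: "of_nat k \<in> RF" unfolding Rfree_LS by (rule LS_of_nat)
lemma RF_prod_list: "(\<And>x. x \<in> set xs \<Longrightarrow> x \<in> RF) \<Longrightarrow> prod_list xs \<in> RF"
  unfolding Rfree_LS by (rule LS_prod_list)

lemma u_fac_RF: "1 \<le> j \<Longrightarrow> j \<le> p+q \<Longrightarrow> u_fac \<gamma> j i \<in> RF"
proof -
  assume j: "1 \<le> j" "j \<le> p+q"
  have a: "lt (U j) + of_nat k \<in> RF" "lt (U j) - of_nat k \<in> RF" for k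
    using j by (auto intro!: RF_add RF_diff RF_lt RF_of_nat)
  have b: "prod_list (map (\<lambda>k. lt (U j) + of_nat k) xs) \<in> RF" "prod_list (map (\<lambda>k. lt (U j) - of_nat k) xs) \<in> RF" for xs
    by (rule RF_prod_list, use a in auto)+
  show ?thesis unfolding u_fac_def using b RF_one by (simp only: split: if_split) blast
qed

lemma tt_RF: "tt (p+q) \<gamma> i \<in> RF"
  unfolding tt_def by (rule RF_prod_list) (auto intro!: u_fac_RF)

lemma rels_FS: "rels p q m eps \<gamma> \<subseteq> (FS :: 'k free_alg set)"
  unfolding rels_def
  using FS_RF[OF tt_RF] FS_RF[OF sigma_RF[OF tt_RF]]
  by (auto intro!: FS_diff FS_mult FS_ltU FS_ltX FS_ltY FS_const FS_RF[OF sigma_RF] FS_RF[OF sigma_inv_RF] tt_RF dest: FS_RF)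

lemma J_FS: "a \<in> JJ \<Longrightarrow> a \<in> FS"
  unfolding Jrel_def by (rule ideal_gen_Fset[OF rels_FS])

lemma rel_J: "a \<in> rels p q m eps \<gamma> \<Longrightarrow> a \<in> JJ"
  unfolding Jrel_def by (rule ideal_gen.gen)

lemma J_zero: "0 \<in> JJ" unfolding Jrel_def by (rule ideal_gen.zero)
lemma J_add: "a \<in> JJ \<Longrightarrow> b \<in> JJ \<Longrightarrow> a + b \<in> JJ" unfolding Jrel_def by (rule ideal_gen.add)
lemma J_diff: "a \<in> JJ \<Longrightarrow> b \<in> JJ \<Longrightarrow> a - b \<in> JJ" unfolding Jrel_def by (rule ig_diff)
lemma J_uminus: "a \<in> JJ \<Longrightarrow> - a \<in> JJ" unfolding Jrel_def by (rule ig_uminus)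
lemma J_left: "a \<in> JJ \<Longrightarrow> x \<in> FS \<Longrightarrow> x * a \<in> JJ" unfolding Jrel_def by (rule ig_mult_left)
lemma J_right: "a \<in> JJ \<Longrightarrow> x \<in> FS \<Longrightarrow> a * x \<in> JJ" unfolding Jrel_def by (rule ig_mult_right)
lemma J_const: "a \<in> JJ \<Longrightarrow> const c * a \<in> JJ" unfolding Jrel_def by (rule ig_const)
lemma J_sum: "(\<And>i. i \<in> I \<Longrightarrow> f i \<in> JJ) \<Longrightarrow> sum f I \<in> JJ" unfolding Jrel_def by (rule ig_sum)

definition cg :: "'k free_alg \<Rightarrow> 'k free_alg \<Rightarrow> bool" (infix "\<approx>" 50) where
  "a \<approx> b \<longleftrightarrow> a - b \<in> JJ"

lemma cg_refl[intro]: "a \<approx> a" by (simp add: cg_def J_zero)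
lemma cg_sym: "a \<approx> b \<Longrightarrow> b \<approx> a"
  unfolding cg_def using J_uminus by fastforce
lemma cg_trans[trans]: "a \<approx> b \<Longrightarrow> b \<approx> c \<Longrightarrow> a \<approx> c"
  unfolding cg_def using J_add by fastforce
lemma cg_eq_trans[trans]: "a = b \<Longrightarrow> b \<approx> c \<Longrightarrow> a \<approx> c" by simp
lemma eq_cg_trans[trans]: "a \<approx> b \<Longrightarrow> b = c \<Longrightarrow> a \<approx> c" by simp
lemma cg_add: "a \<approx> b \<Longrightarrow> c \<approx> d \<Longrightarrow> a + c \<approx> b + d"
  unfolding cg_def using J_add by (fastforce simp: algebra_simps)
lemma cg_diff: "a \<approx> b \<Longrightarrow> c \<approx> d \<Longrightarrow> a - c \<approx> b - d"
  unfolding cg_def using J_diff by (fastforce simp: algebra_simps)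
lemma cg_left: "a \<approx> b \<Longrightarrow> x \<in> FS \<Longrightarrow> x * a \<approx> x * b"
  unfolding cg_def using J_left by (fastforce simp: algebra_simps)
lemma cg_right: "a \<approx> b \<Longrightarrow> x \<in> FS \<Longrightarrow> a * x \<approx> b * x"
  unfolding cg_def using J_right by (fastforce simp: algebra_simps)
lemma cg_const: "a \<approx> b \<Longrightarrow> const c * a \<approx> const c * b"
  unfolding cg_def using J_const by (fastforce simp: algebra_simps)
lemma cg_J: "a \<approx> b \<Longrightarrow> b \<in> JJ \<Longrightarrow> a \<in> JJ"
  unfolding cg_def using J_add by fastforce
lemma J_cg0: "a \<in> JJ \<longleftrightarrow> a \<approx> 0" by (simp add: cg_def)
lemma cg_sum: "(\<And>i. i \<in> I \<Longrightarrow> f i \<approx> g i) \<Longrightarrow> sum f I \<approx> sum g I"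
  unfolding cg_def by (simp add: sum_subtractf[symmetric] J_sum)

lemma R1: "1 \<le> a \<Longrightarrow> a \<le> p+q \<Longrightarrow> 1 \<le> b \<Longrightarrow> b \<le> p+q \<Longrightarrow> lt (U a) * lt (U b) \<approx> lt (U b) * lt (U a)"
  unfolding cg_def by (rule rel_J) (auto simp: rels_def)

lemma R2: "idem j \<Longrightarrow> lt (U j) * lt (U j) \<approx> lt (U j)"
  unfolding cg_def by (rule rel_J) (auto simp: rels_def idem_def)

lemma R3: "1 \<le> i \<Longrightarrow> i \<le> m \<Longrightarrow> r \<in> RF \<Longrightarrow> lt (X i) * r \<approx> sigma p q eps \<gamma> i r * lt (X i)"
  unfolding cg_def by (rule rel_J) (unfold rels_def, blast)

lemma R4: "1 \<le> i \<Longrightarrow> i \<le> m \<Longrightarrow> r \<in> RF \<Longrightarrow> lt (Y i) * r \<approx> sigma_inv p q eps \<gamma> i r * lt (Y i)"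
  unfolding cg_def by (rule rel_J) (unfold rels_def, blast)

lemma R5: "1 \<le> i \<Longrightarrow> i \<le> m \<Longrightarrow> lt (Y i) * lt (X i) \<approx> tt (p+q) \<gamma> i"
  unfolding cg_def by (rule rel_J) (unfold rels_def, blast)

lemma R6: "1 \<le> i \<Longrightarrow> i \<le> m \<Longrightarrow> lt (X i) * lt (Y i) \<approx> sigma p q eps \<gamma> i (tt (p+q) \<gamma> i)"
  unfolding cg_def by (rule rel_J) (unfold rels_def, blast)

lemma R7: "1 \<le> i \<Longrightarrow> i \<le> m \<Longrightarrow> 1 \<le> j \<Longrightarrow> j \<le> m \<Longrightarrow> i \<noteq> j \<Longrightarrow>
   lt (X i) * lt (Y j) \<approx> const (of_int (mu p (p+q) eps \<gamma> i j)) * lt (Y j) * lt (X i)"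
  unfolding cg_def by (rule rel_J) (unfold rels_def, blast)

end




context tgw begin

lemma mu_sq: "const (of_int (mu p (p+q) eps \<gamma> i j)) * const (of_int (mu p (p+q) eps \<gamma> i j)) = (1 :: 'k free_alg)"
proof -
  have "(mu p (p+q) eps \<gamma> i j) * (mu p (p+q) eps \<gamma> i j) = 1"
    using eps unfolding mu_def
    by (auto simp: power_mult_distrib[symmetric] power_add[symmetric] algebra_simps
          simp flip: power_mult_distrib power2_eq_square power_mult)
  hence "const (of_int (mu p (p+q) eps \<gamma> i j) * of_int (mu p (p+q) eps \<gamma> i j)) = (1 :: 'k free_alg)"
    by (metis const_1 of_int_1 of_int_mult)
  thus ?thesis by (simp add: const_mult)
qed

abbreviation vl :: "letter list \<Rightarrow> bool" where
  "vl xs \<equiv> (\<forall>l\<in>set xs. valid_letter (p+q) m l)"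

lemma FS_mon: "vl xs \<Longrightarrow> mon xs \<in> FS"
  unfolding Fset_LS by (rule LS_mon)

lemma swapXY: "1 \<le> i \<Longrightarrow> i \<le> m \<Longrightarrow> 1 \<le> j \<Longrightarrow> j \<le> m \<Longrightarrow> i \<noteq> j \<Longrightarrow>
   \<exists>c. mon [X i, Y j] \<approx> const c * mon [Y j, X i]"
  using R7[of i j] by (auto simp: mon_Cons mult.assoc)

lemma swapYX: "1 \<le> i \<Longrightarrow> i \<le> m \<Longrightarrow> 1 \<le> j \<Longrightarrow> j \<le> m \<Longrightarrow> i \<noteq> j \<Longrightarrow>
   \<exists>c. mon [Y j, X i] \<approx> const c * mon [X i, Y j]"
proof -
  assume a: "1 \<le> i" "i \<le> m" "1 \<le> j" "j \<le> m" "i \<noteq> j"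
  let ?c = "const (of_int (mu p (p+q) eps \<gamma> i j)) :: 'k free_alg"
  have "?c * (lt (X i) * lt (Y j)) \<approx> ?c * (?c * lt (Y j) * lt (X i))"
    using R7[OF a] by (rule cg_const)
  also have "?c * (?c * lt (Y j) * lt (X i)) = lt (Y j) * lt (X i)"
  proof -
    have "?c * (?c * lt (Y j) * lt (X i)) = (?c * ?c) * (lt (Y j) * lt (X i))" by (simp add: mult.assoc)
    thus ?thesis by (simp only: mu_sq mult_1)
  qed
  finally show ?thesis by (intro exI[of _ "of_int (mu p (p+q) eps \<gamma> i j)"]) (auto simp: mon_Cons intro: cg_sym)
qed

section \<open>Commutativity of R modulo J\<close>

lemma times_const_comm: "x * const c = const c * (x :: 'k free_alg)"
  by (rule const_comm[symmetric])

lemma const_left_comm: "x * (const c * y) = const c * (x * (y :: 'k free_alg))"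
  by (metis mult.assoc times_const_comm)

abbreviation ul :: "letter list \<Rightarrow> bool" where
  "ul xs \<equiv> (\<forall>l\<in>set xs. \<exists>j. l = U j \<and> 1 \<le> j \<and> j \<le> p+q)"

lemma ul_vl: "ul xs \<Longrightarrow> vl xs"
  by (auto simp: valid_letter_def)

lemma comm_U_mon: "1 \<le> a \<Longrightarrow> a \<le> p+q \<Longrightarrow> ul ws \<Longrightarrow> lt (U a) * mon ws \<approx> mon ws * lt (U a)"
proof (induction ws)
  case Nil thus ?case by auto
next
  case (Cons l ws)
  then obtain b where b: "l = U b" "1 \<le> b" "b \<le> p+q" by auto
  have "lt (U a) * mon (l # ws) = (lt (U a) * lt (U b)) * mon ws" by (simp add: mon_Cons b mult.assoc)
  also have "\<dots> \<approx> (lt (U b) * lt (U a)) * mon ws"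
    using Cons b by (intro cg_right R1 FS_mon ul_vl) auto
  also have "\<dots> = lt (U b) * (lt (U a) * mon ws)" by (simp add: mult.assoc)
  also have "\<dots> \<approx> lt (U b) * (mon ws * lt (U a))"
  proof (rule cg_left)
    show "lt (U a) * mon ws \<approx> mon ws * lt (U a)" using Cons.IH Cons.prems by simp
    show "lt (U b) \<in> FS" using b by (intro FS_ltU)
  qed
  also have "\<dots> = mon (l # ws) * lt (U a)" by (simp add: mon_Cons b mult.assoc)
  finally show ?case .
qed

lemma comm_mon_mon: "ul vs \<Longrightarrow> ul ws \<Longrightarrow> mon vs * mon ws \<approx> mon ws * mon vs"
proof (induction vs)
  case Nil thus ?case by auto
next
  case (Cons l vs)
  then obtain a where a: "l = U a" "1 \<le> a" "a \<le> p+q" by auto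
  have "mon (l # vs) * mon ws = lt (U a) * (mon vs * mon ws)" by (simp add: mon_Cons a mult.assoc)
  also have "\<dots> \<approx> lt (U a) * (mon ws * mon vs)"
    using Cons a by (intro cg_left FS_ltU) auto
  also have "\<dots> = (lt (U a) * mon ws) * mon vs" by (simp add: mult.assoc)
  also have "\<dots> \<approx> (mon ws * lt (U a)) * mon vs"
    using Cons a by (intro cg_right comm_U_mon FS_mon ul_vl) auto
  also have "\<dots> = mon ws * mon (l # vs)" by (simp add: mon_Cons a mult.assoc)
  finally show ?case .
qed

lemma RF_keys: "r \<in> RF \<Longrightarrow> w \<in> Poly_Mapping.keys r \<Longrightarrow> ul (word_list w)"
  by (auto simp: Rfree_def)

lemma comm_mon_RF: "ul vs \<Longrightarrow> s \<in> RF \<Longrightarrow> mon vs * s \<approx> s * mon vs"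
proof -
  assume vs: "ul vs" and s: "s \<in> RF"
  let ?K = "Poly_Mapping.keys s"
  have "mon vs * s = (\<Sum>w\<in>?K. const (Poly_Mapping.lookup s w) * (mon vs * mon (word_list w)))"
    by (subst expansion[of s]) (simp add: sum_distrib_left const_left_comm)
  also have "\<dots> \<approx> (\<Sum>w\<in>?K. const (Poly_Mapping.lookup s w) * (mon (word_list w) * mon vs))"
    using vs RF_keys[OF s] by (intro cg_sum cg_const comm_mon_mon) auto
  also have "\<dots> = s * mon vs"
    by (subst (2) expansion[of s]) (simp add: sum_distrib_right mult.assoc)
  finally show ?thesis .
qed

lemma comm_RF: "r \<in> RF \<Longrightarrow> s \<in> RF \<Longrightarrow> r * s \<approx> s * r"
proof -
  assume r: "r \<in> RF" and s: "s \<in> RF"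
  let ?K = "Poly_Mapping.keys r"
  have "r * s = (\<Sum>w\<in>?K. const (Poly_Mapping.lookup r w) * (mon (word_list w) * s))"
    by (subst expansion[of r]) (simp add: sum_distrib_right mult.assoc)
  also have "\<dots> \<approx> (\<Sum>w\<in>?K. const (Poly_Mapping.lookup r w) * (s * mon (word_list w)))"
    using s RF_keys[OF r] by (intro cg_sum cg_const comm_mon_RF) auto
  also have "\<dots> = s * r"
    by (subst (2) expansion[of r]) (simp add: sum_distrib_left const_left_comm)
  finally show ?thesis .
qed

section \<open>Transport of elements of R through words\<close>

lemma transport_letter:
  "valid_letter (p+q) m l \<Longrightarrow> r \<in> RF \<Longrightarrow> \<exists>r'\<in>RF. lt l * r \<approx> r' * lt l"
proof (cases l)
  case (U j)
  assume "valid_letter (p+q) m l" "r \<in> RF"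
  with U show ?thesis by (intro bexI[of _ r] comm_RF) (auto simp: valid_letter_def intro: RF_lt)
next
  case (X i)
  assume "valid_letter (p+q) m l" "r \<in> RF"
  with X have "1 \<le> i" "i \<le> m" by (auto simp: valid_letter_def)
  with X \<open>r \<in> RF\<close> show ?thesis using R3 sigma_RF by blast
next
  case (Y i)
  assume "valid_letter (p+q) m l" "r \<in> RF"
  with Y have "1 \<le> i" "i \<le> m" by (auto simp: valid_letter_def)
  with Y \<open>r \<in> RF\<close> show ?thesis using R4 sigma_inv_RF by blast
qed

lemma transport: "vl xs \<Longrightarrow> r \<in> RF \<Longrightarrow> \<exists>r'\<in>RF. mon xs * r \<approx> r' * mon xs"
proof (induction xs arbitrary: r)
  case Nil thus ?case by (auto intro: bexI[of _ r])
next
  case (Cons l xs)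
  then obtain r1 where r1: "r1 \<in> RF" "mon xs * r \<approx> r1 * mon xs" by auto
  obtain r2 where r2: "r2 \<in> RF" "lt l * r1 \<approx> r2 * lt l"
    using transport_letter[of l r1] Cons r1 by auto
  have "mon (l # xs) * r = lt l * (mon xs * r)" by (simp add: mon_Cons mult.assoc)
  also have "\<dots> \<approx> lt l * (r1 * mon xs)" using Cons r1 by (intro cg_left FS_lt) auto
  also have "\<dots> = (lt l * r1) * mon xs" by (simp add: mult.assoc)
  also have "\<dots> \<approx> (r2 * lt l) * mon xs" using Cons r2 by (intro cg_right FS_mon) auto
  also have "\<dots> = r2 * mon (l # xs)" by (simp add: mon_Cons mult.assoc)
  finally show ?case using r2 by blast
qed

end




context tgw begin

definition step :: "nat \<Rightarrow> letter \<Rightarrow> int" where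
  "step k l = (case l of X i \<Rightarrow> \<gamma> k i | Y i \<Rightarrow> - \<gamma> k i | U j \<Rightarrow> 0)"

definition lev :: "nat \<Rightarrow> letter list \<Rightarrow> int" where
  "lev k xs = sum_list (map (step k) xs)"

fun edges :: "nat \<Rightarrow> int \<Rightarrow> letter list \<Rightarrow> int set" where
  "edges k A [] = {}"
| "edges k A (x # xs) = (if step k x = 0 then {} else {min A (A + step k x)}) \<union> edges k (A + step k x) xs"

definition st :: "nat \<Rightarrow> int \<Rightarrow> 'k free_alg" where
  "st k L = (if even L then 1 - lt (U k) else lt (U k))"

lemma lev_Nil[simp]: "lev k [] = 0" by (simp add: lev_def)
lemma lev_Cons[simp]: "lev k (x # xs) = step k x + lev k xs" by (simp add: lev_def)
lemma lev_append[simp]: "lev k (xs @ ys) = lev k xs + lev k ys" by (simp add: lev_def)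

lemma edges_append: "edges k A (xs @ ys) = edges k A xs \<union> edges k (A + lev k xs) ys"
  by (induction xs arbitrary: A) (auto simp: add.assoc)

lemma step_U[simp]: "step k (U j) = 0" by (simp add: step_def)
lemma step_X[simp]: "step k (X i) = \<gamma> k i" by (simp add: step_def)
lemma step_Y[simp]: "step k (Y i) = - \<gamma> k i" by (simp add: step_def)

lemma step_cases: "idem k \<Longrightarrow> valid_letter (p+q) m l \<Longrightarrow> step k l = 0 \<or> step k l = 1 \<or> step k l = -1"
  by (cases l) (auto simp: valid_letter_def dest: gamma_cases)

lemma st_RF: "idem k \<Longrightarrow> st k L \<in> RF"
  unfolding st_def idem_def by (auto intro!: RF_diff RF_one RF_lt)

lemma st_FS: "idem k \<Longrightarrow> st k L \<in> FS"
  by (rule FS_RF[OF st_RF])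

lemma st_plus2: "st k (L + 2) = st k L"
  by (simp add: st_def)

lemma st_minus2: "st k (L - 2) = st k L"
  by (simp add: st_def)

lemma st_compl: "st k (L + 1) + st k L = 1"
  by (simp add: st_def)

lemma sigma_st: "idem k \<Longrightarrow> 1 \<le> i \<Longrightarrow> i \<le> m \<Longrightarrow>
  sigma p q eps \<gamma> i (st k y) = (if \<gamma> k i = 0 then st k y else st k (y + 1))"
  using hom_diff[OF sigma_hom, of i 1 "lt (U k)"] hom_one[OF sigma_hom, of i]
  by (auto simp: st_def sigma_state)

lemma sigma_inv_st: "idem k \<Longrightarrow> 1 \<le> i \<Longrightarrow> i \<le> m \<Longrightarrow>
  sigma_inv p q eps \<gamma> i (st k y) = (if \<gamma> k i = 0 then st k y else st k (y + 1))"
  using hom_diff[OF sigma_inv_hom, of i 1 "lt (U k)"] hom_one[OF sigma_inv_hom, of i]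
  by (auto simp: st_def sigma_inv_state)

lemma st_letter: "idem k \<Longrightarrow> valid_letter (p+q) m l \<Longrightarrow> st k x * lt l \<approx> lt l * st k (x - step k l)"
proof (cases l)
  case (U j)
  assume "idem k" "valid_letter (p+q) m l"
  with U show ?thesis by (auto intro!: comm_RF st_RF RF_lt simp: valid_letter_def)
next
  case (X i)
  assume k: "idem k" and v: "valid_letter (p+q) m l"
  with X have i: "1 \<le> i" "i \<le> m" by (auto simp: valid_letter_def)
  have "lt (X i) * st k (x - \<gamma> k i) \<approx> sigma p q eps \<gamma> i (st k (x - \<gamma> k i)) * lt (X i)"
    using i k by (intro R3 st_RF)
  also have "sigma p q eps \<gamma> i (st k (x - \<gamma> k i)) = st k x"
    using gamma_cases[OF k i] sigma_st[OF k i, of "x - \<gamma> k i"]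
    by (auto simp: st_def)
  finally show ?thesis using X by (auto intro: cg_sym)
next
  case (Y i)
  assume k: "idem k" and v: "valid_letter (p+q) m l"
  with Y have i: "1 \<le> i" "i \<le> m" by (auto simp: valid_letter_def)
  have "lt (Y i) * st k (x + \<gamma> k i) \<approx> sigma_inv p q eps \<gamma> i (st k (x + \<gamma> k i)) * lt (Y i)"
    using i k by (intro R4 st_RF)
  also have "sigma_inv p q eps \<gamma> i (st k (x + \<gamma> k i)) = st k x"
    using gamma_cases[OF k i] sigma_inv_st[OF k i, of "x + \<gamma> k i"]
    by (auto simp: st_def)
  finally show ?thesis using Y by (auto intro: cg_sym)
qed

lemma st_word: "idem k \<Longrightarrow> vl xs \<Longrightarrow> st k x * mon xs \<approx> mon xs * st k (x - lev k xs)"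
proof (induction xs arbitrary: x)
  case Nil thus ?case by auto
next
  case (Cons l xs)
  have "st k x * mon (l # xs) = (st k x * lt l) * mon xs" by (simp add: mon_Cons mult.assoc)
  also have "\<dots> \<approx> (lt l * st k (x - step k l)) * mon xs"
    using Cons.prems by (intro cg_right st_letter FS_mon) auto
  also have "\<dots> = lt l * (st k (x - step k l) * mon xs)" by (simp add: mult.assoc)
  also have "\<dots> \<approx> lt l * (mon xs * st k (x - step k l - lev k xs))"
  proof (rule cg_left)
    show "st k (x - step k l) * mon xs \<approx> mon xs * st k (x - step k l - lev k xs)"
      using Cons.IH Cons.prems by simp
    show "lt l \<in> FS" using Cons.prems by (intro FS_lt) auto
  qed
  also have "\<dots> = mon (l # xs) * st k (x - lev k (l # xs))" by (simp add: mon_Cons mult.assoc algebra_simps)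
  finally show ?case .
qed

lemma uu: "idem k \<Longrightarrow> lt (U k) * (1 - lt (U k)) \<approx> (0 :: 'k free_alg)"
proof -
  assume k: "idem k"
  have "lt (U k) * (1 - lt (U k)) = lt (U k) - lt (U k) * lt (U k)" by (simp add: algebra_simps)
  also have "\<dots> \<approx> lt (U k) - lt (U k)" using R2[OF k] by (intro cg_diff) auto
  finally show ?thesis by simp
qed

lemma kill1: "idem k \<Longrightarrow> x \<in> RF \<Longrightarrow> y \<in> RF \<Longrightarrow> lt (U k) * (x * (1 - lt (U k)) * y) \<in> JJ"
proof -
  assume k: "idem k" and x: "x \<in> RF" and y: "y \<in> RF"
  have uk: "lt (U k) \<in> RF" using k by (auto simp: idem_def intro: RF_lt)
  have "lt (U k) * (x * (1 - lt (U k)) * y) = (lt (U k) * x) * (1 - lt (U k)) * y" by (simp add: mult.assoc)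
  also have "\<dots> \<approx> (x * lt (U k)) * (1 - lt (U k)) * y"
    using uk x y k by (intro cg_right comm_RF FS_RF RF_diff RF_one RF_mult) auto
  also have "\<dots> = x * (lt (U k) * (1 - lt (U k))) * y" by (simp add: mult.assoc)
  also have "\<dots> \<approx> x * 0 * y"
    using uu[OF k] x y by (intro cg_right cg_left FS_RF) auto
  finally show ?thesis by (simp add: J_cg0)
qed

lemma kill2: "idem k \<Longrightarrow> x \<in> RF \<Longrightarrow> y \<in> RF \<Longrightarrow> (1 - lt (U k)) * (x * lt (U k) * y) \<in> JJ"
proof -
  assume k: "idem k" and x: "x \<in> RF" and y: "y \<in> RF"
  have uk: "lt (U k) \<in> RF" using k by (auto simp: idem_def intro: RF_lt)
  have "(1 - lt (U k)) * (x * lt (U k) * y) = ((1 - lt (U k)) * x) * lt (U k) * y" by (simp add: mult.assoc)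
  also have "\<dots> \<approx> (x * (1 - lt (U k))) * lt (U k) * y"
    using uk x y k by (intro cg_right comm_RF FS_RF RF_diff RF_one RF_mult) auto
  also have "\<dots> = x * (lt (U k) * (1 - lt (U k))) * y" by (simp add: mult.assoc algebra_simps)
  also have "\<dots> \<approx> x * 0 * y"
    using uu[OF k] x y by (intro cg_right cg_left FS_RF) auto
  finally show ?thesis by (simp add: J_cg0)
qed

lemma tt_split: "1 \<le> k \<Longrightarrow> k \<le> p+q \<Longrightarrow>
  \<exists>P1 P2. P1 \<in> RF \<and> P2 \<in> RF \<and> tt (p+q) \<gamma> a = P1 * u_fac \<gamma> k a * P2"
proof -
  assume k: "1 \<le> k" "k \<le> p+q"
  have "[1..<p+q+1] = [1..<k] @ k # [Suc k..<p+q+1]"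
  proof -
    have "[1..<p+q+1] = [1..<k] @ [k..<p+q+1]"
      using upt_add_eq_append[of 1 k "p+q+1-k"] k by simp
    moreover have "[k..<p+q+1] = k # [Suc k..<p+q+1]"
      using k by (simp add: upt_conv_Cons)
    ultimately show ?thesis by simp
  qed
  hence "tt (p+q) \<gamma> a = prod_list (map (\<lambda>j. u_fac \<gamma> j a) [1..<k]) * u_fac \<gamma> k a * prod_list (map (\<lambda>j. u_fac \<gamma> j a) [Suc k..<p+q+1])"
    by (simp add: tt_def mult.assoc)
  moreover have "prod_list (map (\<lambda>j. u_fac \<gamma> j a) [1..<k]) \<in> RF"
    using k by (intro RF_prod_list) (auto intro!: u_fac_RF)
  moreover have "prod_list (map (\<lambda>j. u_fac \<gamma> j a) [Suc k..<p+q+1]) \<in> RF"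
    using k by (intro RF_prod_list) (auto intro!: u_fac_RF)
  ultimately show ?thesis by blast
qed

lemma u_fac_one: "\<gamma> k a = 1 \<Longrightarrow> u_fac \<gamma> k a = lt (U k)"
  by (simp add: u_fac_def)

lemma u_fac_mone: "\<gamma> k a = -1 \<Longrightarrow> u_fac \<gamma> k a = lt (U k) - 1"
  by (simp add: u_fac_def)

end




context tgw begin

lemma neg_mid: "x * (P1 * (- F) * P2) = - (x * (P1 * F * (P2 :: 'k free_alg)))"
  by (simp add: algebra_simps)

lemma pair_kill_XY:
  assumes k: "idem k" and a: "1 \<le> a" "a \<le> m" and s: "\<gamma> k a \<noteq> 0"
  shows "st k (min 0 (\<gamma> k a) + 1) * mon [X a, Y a] \<in> JJ"
proof -
  have kk: "1 \<le> k" "k \<le> p+q" using k by (auto simp: idem_def)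
  obtain P1 P2 where P: "P1 \<in> RF" "P2 \<in> RF" "tt (p+q) \<gamma> a = P1 * u_fac \<gamma> k a * P2"
    using tt_split[OF kk] by blast
  let ?s = "sigma p q eps \<gamma> a :: 'k free_alg \<Rightarrow> 'k free_alg"
  have h: "ishom (?s :: 'k free_alg \<Rightarrow> _)" by (rule sigma_hom)
  have S: "?s (tt (p+q) \<gamma> a) = ?s P1 * ?s (u_fac \<gamma> k a) * ?s P2"
    using P(3) by (simp add: hom_mult[OF h])
  have SR: "?s P1 \<in> RF" "?s P2 \<in> RF" using P by (auto intro: sigma_RF)
  have e: "st k (min 0 (\<gamma> k a) + 1) * mon [X a, Y a] \<approx> st k (min 0 (\<gamma> k a) + 1) * ?s (tt (p+q) \<gamma> a)"
    using R6[OF a] k by (intro cg_left st_FS) (simp_all add: mon_Cons)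
  have "st k (min 0 (\<gamma> k a) + 1) * ?s (tt (p+q) \<gamma> a) \<in> JJ"
  proof (cases "\<gamma> k a = 1")
    case True
    hence "?s (u_fac \<gamma> k a) = 1 - lt (U k)" using sigma_state[OF k a] by (simp add: u_fac_one)
    with True S show ?thesis using kill1[OF k SR] by (simp add: st_def)
  next
    case False
    with gamma_cases[OF k a] s have m1: "\<gamma> k a = -1" by auto
    hence "?s (u_fac \<gamma> k a) = - lt (U k)" using sigma_state[OF k a]
      by (simp add: u_fac_mone hom_diff[OF h] hom_one[OF h])
    with m1 S show ?thesis using kill2[OF k SR] by (simp add: st_def neg_mid J_uminus)
  qed
  with e show ?thesis by (rule cg_J)
qed

lemma pair_kill_YX:
  assumes k: "idem k" and a: "1 \<le> a" "a \<le> m" and s: "\<gamma> k a \<noteq> 0"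
  shows "st k (min 0 (- \<gamma> k a) + 1) * mon [Y a, X a] \<in> JJ"
proof -
  have kk: "1 \<le> k" "k \<le> p+q" using k by (auto simp: idem_def)
  obtain P1 P2 where P: "P1 \<in> RF" "P2 \<in> RF" "tt (p+q) \<gamma> a = P1 * u_fac \<gamma> k a * P2"
    using tt_split[OF kk] by blast
  have e: "st k (min 0 (- \<gamma> k a) + 1) * mon [Y a, X a] \<approx> st k (min 0 (- \<gamma> k a) + 1) * tt (p+q) \<gamma> a"
    using R5[OF a] k by (intro cg_left st_FS) (simp_all add: mon_Cons)
  have "st k (min 0 (- \<gamma> k a) + 1) * tt (p+q) \<gamma> a \<in> JJ"
  proof (cases "\<gamma> k a = 1")
    case True
    with P show ?thesis using kill2[OF k P(1,2)] by (simp add: st_def u_fac_one)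
  next
    case False
    with gamma_cases[OF k a] s have m1: "\<gamma> k a = -1" by auto
    have "lt (U k) - 1 = - (1 - (lt (U k) :: 'k free_alg))" by simp
    with m1 P show ?thesis using kill1[OF k P(1,2)]
      by (simp add: st_def u_fac_mone neg_mid J_uminus del: minus_diff_eq)
  qed
  with e show ?thesis by (rule cg_J)
qed

definition QP :: "letter list \<Rightarrow> bool" where
  "QP v = (\<forall>k. idem k \<longrightarrow> (\<forall>L\<in>edges k 0 v. st k (L + 1) * mon v \<in> JJ))"

lemma QP_of_J: "vl v \<Longrightarrow> mon v \<in> JJ \<Longrightarrow> QP v"
  by (auto simp: QP_def intro: J_left st_FS)

lemma QP_bad: "QP v \<Longrightarrow> idem k \<Longrightarrow> L \<in> edges k 0 v \<Longrightarrow> L + 1 \<in> edges k 0 v \<Longrightarrow> mon v \<in> JJ"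
proof -
  assume Q: "QP v" and k: "idem k" and L: "L \<in> edges k 0 v" "L + 1 \<in> edges k 0 v"
  have "st k (L + 1) * mon v \<in> JJ" using Q k L(1) unfolding QP_def by blast
  moreover have "st k ((L + 1) + 1) * mon v \<in> JJ" using Q k L(2) unfolding QP_def by blast
  ultimately have "(st k (L + 1 + 1) + st k (L + 1)) * mon v \<in> JJ" by (simp add: distrib_right J_add)
  thus ?thesis by (simp only: st_compl mult_1)
qed

lemma QP_transfer:
  assumes "mon v \<approx> r * mon w" "r \<in> RF" "QP w" "idem k" "L \<in> edges k 0 w" "vl w"
  shows "st k (L + 1) * mon v \<in> JJ"
proof -
  have "st k (L + 1) * mon v \<approx> st k (L + 1) * (r * mon w)"
    using assms by (intro cg_left st_FS)
  also have "\<dots> = (st k (L + 1) * r) * mon w" by (simp add: mult.assoc)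
  also have "\<dots> \<approx> (r * st k (L + 1)) * mon w"
    using assms by (intro cg_right comm_RF st_RF FS_mon)
  also have "\<dots> = r * (st k (L + 1) * mon w)" by (simp add: mult.assoc)
  finally have "st k (L + 1) * mon v \<approx> r * (st k (L + 1) * mon w)" .
  moreover have "r * (st k (L + 1) * mon w) \<in> JJ"
    by (rule J_left) (use assms in \<open>auto simp: QP_def intro: FS_RF\<close>)
  ultimately show ?thesis by (rule cg_J)
qed

end




fun idx :: "letter \<Rightarrow> nat" where
  "idx (U j) = j" | "idx (X i) = i" | "idx (Y i) = i"
fun isX :: "letter \<Rightarrow> bool" where
  "isX (X i) = True" | "isX _ = False"
fun isY :: "letter \<Rightarrow> bool" where
  "isY (Y i) = True" | "isY _ = False"

definition opp :: "letter \<Rightarrow> letter \<Rightarrow> bool" where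
  "opp x y = ((isX x \<and> isY y) \<or> (isY x \<and> isX y))"

definition matched :: "letter \<Rightarrow> letter \<Rightarrow> bool" where
  "matched x y = (opp x y \<and> idx x = idx y)"

definition swap1 :: "letter list \<Rightarrow> letter list \<Rightarrow> bool" where
  "swap1 v w = (\<exists>\<alpha> \<beta> x y. v = \<alpha> @ [x, y] @ \<beta> \<and> w = \<alpha> @ [y, x] @ \<beta> \<and> opp x y \<and> idx x \<noteq> idx y)"

lemma isX_ex: "isX x \<Longrightarrow> \<exists>i. x = X i" by (cases x) auto
lemma isY_ex: "isY x \<Longrightarrow> \<exists>i. x = Y i" by (cases x) auto

context tgw begin

lemma edges_two: "edges k A [x, y] = (if step k x = 0 then {} else {min A (A + step k x)}) \<union>
   (if step k y = 0 then {} else {min (A + step k x) (A + step k x + step k y)})"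
  by simp

lemma edges_swap2:
  assumes "step k x \<in> {-1,0,1}" "step k y \<in> {-1,0,1}" "step k x * step k y \<ge> 0"
  shows "edges k A [x, y] = edges k A [y, x]"
  using assms unfolding edges_two by (auto simp: mult_less_0_iff)

lemma edges_bad2:
  assumes "step k x = step k y" "step k x = 1 \<or> step k x = -1"
  shows "\<exists>L. L \<in> edges k A [y, x] \<and> L + 1 \<in> edges k A [y, x]"
  using assms unfolding edges_two by (auto intro: exI[of _ A] exI[of _ "A - 2"])

lemma swap_mon:
  assumes "vl (\<alpha> @ [x, y] @ \<beta>)" "opp x y" "idx x \<noteq> idx y"
  shows "\<exists>c. mon (\<alpha> @ [x, y] @ \<beta>) \<approx> const c * mon (\<alpha> @ [y, x] @ \<beta>)"
proof -
  have v: "valid_letter (p+q) m x" "valid_letter (p+q) m y" "vl \<alpha>" "vl \<beta>" using assms(1) by auto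
  obtain c where c: "mon [x, y] \<approx> const c * mon [y, x]"
  proof (cases "isX x")
    case True
    then obtain i where i: "x = X i" using isX_ex by blast
    from assms(2) True have "isY y" by (cases y) (auto simp: opp_def i)
    then obtain j where j: "y = Y j" using isY_ex by blast
    show ?thesis using swapXY[of i j] v assms(3) i j that by (auto simp: valid_letter_def)
  next
    case False
    with assms(2) have "isY x" "isX y" by (auto simp: opp_def)
    then obtain i j where i: "x = Y j" "y = X i" using isX_ex isY_ex by blast
    show ?thesis using swapYX[of i j] v assms(3) i that by (auto simp: valid_letter_def)
  qed
  have "mon (\<alpha> @ [x, y] @ \<beta>) = mon \<alpha> * (mon [x, y] * mon \<beta>)" by (simp only: mon_append)
  also have "\<dots> \<approx> mon \<alpha> * ((const c * mon [y, x]) * mon \<beta>)"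
    using c v by (intro cg_left cg_right FS_mon)
  also have "\<dots> = const c * mon (\<alpha> @ [y, x] @ \<beta>)"
    by (simp only: mon_append const_left_comm mult.assoc)
  finally show ?thesis by blast
qed

lemma swap_QP: "vl v \<Longrightarrow> swap1 v w \<Longrightarrow> QP w \<Longrightarrow> QP v"
proof -
  assume vv: "vl v" and sw: "swap1 v w" and Qw: "QP w"
  then obtain \<alpha> \<beta> x y where vw: "v = \<alpha> @ [x, y] @ \<beta>" "w = \<alpha> @ [y, x] @ \<beta>" "opp x y" "idx x \<noteq> idx y"
    unfolding swap1_def by blast
  have vwv: "vl w" using vv vw by auto
  obtain c where c: "mon v \<approx> const c * mon w" using swap_mon[of \<alpha> x y \<beta>] vv vw by auto
  obtain b d where bd: "{x, y} = {X b, Y d}" "b \<noteq> d"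
  proof (cases "isX x")
    case True
    then obtain i where i: "x = X i" using isX_ex by blast
    from vw(3) True have "isY y" by (cases y) (auto simp: opp_def i)
    then obtain j where j: "y = Y j" using isY_ex by blast
    show ?thesis using that[of i j] i j vw(4) by auto
  next
    case False
    with vw(3) have "isY x" "isX y" by (auto simp: opp_def)
    then obtain i j where i: "x = Y j" "y = X i" using isX_ex isY_ex by blast
    show ?thesis using that[of i j] i vw(4) by auto
  qed
  have bm: "1 \<le> b" "b \<le> m" "1 \<le> d" "d \<le> m"
    using vv vw(1) bd by (auto simp: valid_letter_def doubleton_eq_iff)
  have steps: "{step k x, step k y} = {\<gamma> k b, - \<gamma> k d}" for k
    using bd by (auto simp: doubleton_eq_iff)
  have "(\<exists>k. 1 \<le> k \<and> k \<le> p+q \<and> lam p eps k k = -1 \<and> \<gamma> k b * \<gamma> k d < 0) \<or>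
        (\<forall>k. 1 \<le> k \<and> k \<le> p+q \<longrightarrow> \<gamma> k b * \<gamma> k d \<le> 0)"
    using gok bm bd(2) unfolding gamma_ok_def by blast
  thus "QP v"
  proof
    assume "\<exists>k. 1 \<le> k \<and> k \<le> p+q \<and> lam p eps k k = -1 \<and> \<gamma> k b * \<gamma> k d < 0"
    then obtain k where k: "idem k" "\<gamma> k b * \<gamma> k d < 0" by (auto simp: idem_def)
    have gb: "\<gamma> k b = 0 \<or> \<gamma> k b = 1 \<or> \<gamma> k b = -1" "\<gamma> k d = 0 \<or> \<gamma> k d = 1 \<or> \<gamma> k d = -1"
      using gamma_cases[OF k(1)] bm by auto
    have "step k x = step k y \<and> (step k x = 1 \<or> step k x = -1)"
      using steps[of k] gb k(2) by (auto simp: doubleton_eq_iff)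
    then obtain L where L: "L \<in> edges k (lev k \<alpha>) [y, x]" "L + 1 \<in> edges k (lev k \<alpha>) [y, x]"
      using edges_bad2 by blast
    have "L \<in> edges k 0 w" "L + 1 \<in> edges k 0 w" using L vw(2) by (auto simp: edges_append)
    hence "mon w \<in> JJ" using QP_bad[OF Qw k(1)] by blast
    hence "mon v \<in> JJ" using c by (elim cg_J) (rule J_const)
    thus "QP v" using vv by (rule QP_of_J[rotated])
  next
    assume all: "\<forall>k. 1 \<le> k \<and> k \<le> p+q \<longrightarrow> \<gamma> k b * \<gamma> k d \<le> 0"
    show "QP v" unfolding QP_def
    proof (intro allI impI ballI)
      fix k L assume k: "idem k" and L: "L \<in> edges k 0 v"
      have gb: "\<gamma> k b = 0 \<or> \<gamma> k b = 1 \<or> \<gamma> k b = -1" "\<gamma> k d = 0 \<or> \<gamma> k d = 1 \<or> \<gamma> k d = -1"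
        using gamma_cases[OF k] bm by auto
      have "\<gamma> k b * \<gamma> k d \<le> 0" using all k by (auto simp: idem_def)
      hence "step k x \<in> {-1,0,1} \<and> step k y \<in> {-1,0,1} \<and> step k x * step k y \<ge> 0"
        using steps[of k] gb by (auto simp: doubleton_eq_iff)
      hence "edges k (lev k \<alpha>) [x, y] = edges k (lev k \<alpha>) [y, x]" using edges_swap2 by blast
      moreover have "lev k [x, y] = lev k [y, x]" by simp
      moreover have "edges k 0 (\<alpha> @ [x, y] @ \<beta>) = edges k 0 \<alpha> \<union> (edges k (0 + lev k \<alpha>) [x, y] \<union> edges k (0 + lev k \<alpha> + lev k [x, y]) \<beta>)"
        "edges k 0 (\<alpha> @ [y, x] @ \<beta>) = edges k 0 \<alpha> \<union> (edges k (0 + lev k \<alpha>) [y, x] \<union> edges k (0 + lev k \<alpha> + lev k [y, x]) \<beta>)"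
        by (simp only: edges_append)+
      ultimately have "edges k 0 v = edges k 0 w" using vw by (simp add: ac_simps)
      with L have Lw: "L \<in> edges k 0 w" by simp
      have "st k (L + 1) * mon v \<approx> st k (L + 1) * (const c * mon w)"
        using c k by (intro cg_left st_FS)
      also have "\<dots> = const c * (st k (L + 1) * mon w)" by (simp add: const_left_comm)
      finally show "st k (L + 1) * mon v \<in> JJ"
        using Qw k Lw by (elim cg_J) (auto simp: QP_def intro: J_const)
    qed
  qed
qed

lemma swap1_vl: "swap1 v w \<Longrightarrow> vl v \<Longrightarrow> vl w"
  by (auto simp: swap1_def)

lemma swaps_QP: "swap1\<^sup>*\<^sup>* v w \<Longrightarrow> vl v \<Longrightarrow> QP w \<Longrightarrow> QP v"
proof (induction rule: converse_rtranclp_induct)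
  case base thus ?case by simp
next
  case (step v v')
  thus ?case using swap_QP swap1_vl by blast
qed

end




lemma matched_cases: "matched x y \<Longrightarrow> (x = X (idx x) \<and> y = Y (idx x)) \<or> (x = Y (idx x) \<and> y = X (idx x))"
  by (cases x; cases y) (auto simp: matched_def opp_def)

context tgw begin

lemma contract_QP:
  assumes vv: "vl (\<alpha> @ [l1, l2] @ \<beta>)" and mt: "matched l1 l2" and Q: "QP (\<alpha> @ \<beta>)"
  shows "QP (\<alpha> @ [l1, l2] @ \<beta>)"
proof -
  let ?v = "\<alpha> @ [l1, l2] @ \<beta>"
  define a where "a = idx l1"
  have cs: "(l1 = X a \<and> l2 = Y a) \<or> (l1 = Y a \<and> l2 = X a)" using matched_cases[OF mt] by (auto simp: a_def)
  have am: "1 \<le> a" "a \<le> m" using vv cs by (auto simp: valid_letter_def)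
  have va: "vl \<alpha>" "vl \<beta>" "vl (\<alpha> @ \<beta>)" using vv by auto
  obtain \<rho> where rho: "mon [l1, l2] \<approx> \<rho>" "\<rho> \<in> RF"
    using cs R5[OF am] R6[OF am] tt_RF sigma_RF by (auto simp: mon_Cons)
  obtain r where r: "r \<in> RF" "mon \<alpha> * \<rho> \<approx> r * mon \<alpha>" using transport[OF va(1) rho(2)] by blast
  have mv: "mon ?v \<approx> r * mon (\<alpha> @ \<beta>)"
  proof -
    have "mon ?v = mon \<alpha> * mon [l1, l2] * mon \<beta>" by (simp only: mon_append mult.assoc)
    also have "\<dots> \<approx> mon \<alpha> * \<rho> * mon \<beta>" using rho va by (intro cg_right cg_left FS_mon)
    also have "\<dots> \<approx> r * mon \<alpha> * mon \<beta>" using r va by (intro cg_right FS_mon)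
    also have "\<dots> = r * mon (\<alpha> @ \<beta>)" by (simp add: mon_append mult.assoc)
    finally show ?thesis .
  qed
  show ?thesis unfolding QP_def
  proof (intro allI impI ballI)
    fix k L assume k: "idem k" and L: "L \<in> edges k 0 ?v"
    define A where "A = lev k \<alpha>"
    have sl: "step k l2 = - step k l1" using cs by auto
    have ev: "edges k 0 ?v = edges k 0 \<alpha> \<union> (edges k (0 + lev k \<alpha>) [l1, l2] \<union> edges k (0 + lev k \<alpha> + lev k [l1, l2]) \<beta>)"
      by (simp only: edges_append)
    have ew: "edges k 0 (\<alpha> @ \<beta>) = edges k 0 \<alpha> \<union> edges k (0 + lev k \<alpha>) \<beta>"
      by (simp only: edges_append)
    show "st k (L + 1) * mon ?v \<in> JJ"
    proof (cases "L \<in> edges k 0 (\<alpha> @ \<beta>)")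
      case True
      show ?thesis using QP_transfer[OF mv r(1) Q k True va(3)] by simp
    next
      case False
      with L ev ew sl have L2: "L \<in> edges k A [l1, l2]" by (auto simp: A_def)
      hence s0: "step k l1 \<noteq> 0" and LA: "L = min A (A + step k l1)" using sl by (auto split: if_splits)
      have pk: "st k (min 0 (step k l1) + 1) * mon [l1, l2] \<in> JJ"
        using cs s0 pair_kill_XY[OF k am] pair_kill_YX[OF k am] by auto
      have "st k (L + 1) * mon ?v = (st k (L + 1) * mon \<alpha>) * mon [l1, l2] * mon \<beta>"
        by (simp only: mon_append mult.assoc)
      also have "\<dots> \<approx> (mon \<alpha> * st k (L + 1 - lev k \<alpha>)) * mon [l1, l2] * mon \<beta>"
        using va vv k by (intro cg_right st_word FS_mon) auto
      also have "L + 1 - lev k \<alpha> = min 0 (step k l1) + 1" using LA by (auto simp: A_def)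
      also have "(mon \<alpha> * st k (min 0 (step k l1) + 1)) * mon [l1, l2] * mon \<beta>
          = mon \<alpha> * (st k (min 0 (step k l1) + 1) * mon [l1, l2]) * mon \<beta>" by (simp add: mult.assoc)
      finally have "st k (L + 1) * mon ?v \<approx> mon \<alpha> * (st k (min 0 (step k l1) + 1) * mon [l1, l2]) * mon \<beta>" .
      moreover have "mon \<alpha> * (st k (min 0 (step k l1) + 1) * mon [l1, l2]) * mon \<beta> \<in> JJ"
        by (rule J_right[OF J_left[OF pk]]) (use va in \<open>auto intro: FS_mon\<close>)
      ultimately show ?thesis by (rule cg_J)
    qed
  qed
qed

lemma U_QP:
  assumes vv: "vl (\<alpha> @ U c # \<beta>)" and Q: "QP (\<alpha> @ \<beta>)"
  shows "QP (\<alpha> @ U c # \<beta>)"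
proof -
  have va: "vl \<alpha>" "vl \<beta>" "vl (\<alpha> @ \<beta>)" using vv by auto
  have uc: "lt (U c) \<in> RF" using vv by (intro RF_lt) (auto simp: valid_letter_def)
  obtain r where r: "r \<in> RF" "mon \<alpha> * lt (U c) \<approx> r * mon \<alpha>" using transport[OF va(1) uc] by blast
  have mv: "mon (\<alpha> @ U c # \<beta>) \<approx> r * mon (\<alpha> @ \<beta>)"
  proof -
    have "mon (\<alpha> @ U c # \<beta>) = mon \<alpha> * lt (U c) * mon \<beta>" by (simp add: mon_append mon_Cons mult.assoc)
    also have "\<dots> \<approx> r * mon \<alpha> * mon \<beta>" using r va by (intro cg_right FS_mon)
    also have "\<dots> = r * mon (\<alpha> @ \<beta>)" by (simp add: mon_append mult.assoc)
    finally show ?thesis .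
  qed
  show ?thesis unfolding QP_def
  proof (intro allI impI ballI)
    fix k L assume k: "idem k" and L: "L \<in> edges k 0 (\<alpha> @ U c # \<beta>)"
    hence "L \<in> edges k 0 (\<alpha> @ \<beta>)" by (simp add: edges_append)
    thus "st k (L + 1) * mon (\<alpha> @ U c # \<beta>) \<in> JJ" using QP_transfer[OF mv r(1) Q k _ va(3)] by blast
  qed
qed

end

section \<open>Combinatorics of swaps\<close>

lemma swap1_ctx: "swap1 u u' \<Longrightarrow> swap1 (\<alpha> @ u @ \<beta>) (\<alpha> @ u' @ \<beta>)"
  unfolding swap1_def by (metis append.assoc)

lemma swaps_ctx: "swap1\<^sup>*\<^sup>* u u' \<Longrightarrow> swap1\<^sup>*\<^sup>* (\<alpha> @ u @ \<beta>) (\<alpha> @ u' @ \<beta>)"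
  by (induction rule: rtranclp_induct) (auto intro: rtranclp.rtrancl_into_rtrancl swap1_ctx)

lemma swap1_here: "opp x y \<Longrightarrow> idx x \<noteq> idx y \<Longrightarrow> swap1 (x # y # \<beta>) (y # x # \<beta>)"
  unfolding swap1_def by (rule exI[of _ "[]"]) auto

lemma pass_right: "(\<forall>y\<in>set ys. opp x y \<and> idx x \<noteq> idx y) \<Longrightarrow> swap1\<^sup>*\<^sup>* (x # ys) (ys @ [x])"
proof (induction ys)
  case Nil thus ?case by simp
next
  case (Cons y ys)
  have "swap1 (x # y # ys) (y # x # ys)" using Cons.prems by (intro swap1_here) auto
  moreover have "swap1\<^sup>*\<^sup>* ([y] @ (x # ys) @ []) ([y] @ (ys @ [x]) @ [])"
    using Cons by (intro swaps_ctx) auto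
  ultimately show ?case by (simp add: converse_rtranclp_into_rtranclp)
qed

lemma pass_left: "(\<forall>y\<in>set ys. opp y x \<and> idx y \<noteq> idx x) \<Longrightarrow> swap1\<^sup>*\<^sup>* (ys @ [x]) (x # ys)"
proof (induction ys)
  case Nil thus ?case by simp
next
  case (Cons y ys)
  have "swap1\<^sup>*\<^sup>* ([y] @ (ys @ [x]) @ []) ([y] @ (x # ys) @ [])"
    using Cons by (intro swaps_ctx) auto
  moreover have "swap1 (y # x # ys) (x # y # ys)" using Cons.prems by (intro swap1_here) auto
  ultimately show ?case by (simp add: rtranclp.rtrancl_into_rtrancl)
qed

lemma sort_swaps:
  "(\<forall>x\<in>set z. \<forall>y\<in>set z. P x \<and> \<not> P y \<longrightarrow> opp y x \<and> idx y \<noteq> idx x) \<Longrightarrow>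
   swap1\<^sup>*\<^sup>* z (filter P z @ filter (\<lambda>x. \<not> P x) z)"
proof (induction z)
  case Nil thus ?case by simp
next
  case (Cons c z)
  have IH: "swap1\<^sup>*\<^sup>* ([c] @ z @ []) ([c] @ (filter P z @ filter (\<lambda>x. \<not> P x) z) @ [])"
    using Cons by (intro swaps_ctx) auto
  show ?case
  proof (cases "P c")
    case True with IH show ?thesis by simp
  next
    case False
    have "swap1\<^sup>*\<^sup>* ([] @ (c # filter P z) @ filter (\<lambda>x. \<not> P x) z) ([] @ (filter P z @ [c]) @ filter (\<lambda>x. \<not> P x) z)"
      using Cons.prems False by (intro swaps_ctx pass_right) auto
    with IH False show ?thesis by (auto elim: rtranclp_trans)
  qed
qed

lemma clean_decomp:
  "\<forall>x\<in>set v. isX x \<or> isY x \<Longrightarrow> x \<in> set v \<Longrightarrow> y \<in> set v \<Longrightarrow> matched x y \<Longrightarrow>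
   \<exists>\<alpha> l1 z l2 \<beta>. v = \<alpha> @ l1 # z @ l2 # \<beta> \<and> matched l1 l2 \<and> (\<forall>w\<in>set z. idx w \<noteq> idx l1) \<and>
     (\<forall>w1\<in>set z. \<forall>w2\<in>set z. \<not> matched w1 w2)"
proof (induction "length v" arbitrary: v x y rule: less_induct)
  case less
  have msym: "matched a b \<Longrightarrow> matched b a" for a b by (auto simp: matched_def opp_def)
  have xy: "x \<noteq> y" using less.prems(4) by (cases x; cases y) (auto simp: matched_def opp_def)
  obtain \<alpha> l1 z l2 \<beta> where d: "v = \<alpha> @ l1 # z @ l2 # \<beta>" "matched l1 l2"
  proof -
    obtain v1 v2 where v: "v = v1 @ x # v2" using split_list[OF less.prems(2)] by blast
    show ?thesis
    proof (cases "y \<in> set v2")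
      case True
      then obtain z \<beta> where "v2 = z @ y # \<beta>" using split_list[of y v2] by blast
      thus ?thesis using that[of v1 x z y \<beta>] v less.prems(4) by auto
    next
      case False
      with less.prems(3) xy v have "y \<in> set v1" by auto
      then obtain \<alpha> z where "v1 = \<alpha> @ y # z" using split_list[of y v1] by blast
      thus ?thesis using that[of \<alpha> y z x v2] v msym[OF less.prems(4)] by auto
    qed
  qed
  show ?case
  proof (cases "(\<forall>w\<in>set z. idx w \<noteq> idx l1) \<and> (\<forall>w1\<in>set z. \<forall>w2\<in>set z. \<not> matched w1 w2)")
    case True thus ?thesis using d by blast
  next
    case False
    have XY: "\<forall>x\<in>set z. isX x \<or> isY x" "isX l1 \<or> isY l1" "isX l2 \<or> isY l2" using less.prems(1) d by auto
    have "\<exists>u pre suf x' y'. v = pre @ u @ suf \<and> length u < length v \<and> x' \<in> set u \<and> y' \<in> set u \<and> matched x' y'"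
    proof (cases "\<exists>w\<in>set z. idx w = idx l1")
      case True
      then obtain w where w: "w \<in> set z" "idx w = idx l1" by blast
      have "matched l1 w \<or> matched w l2"
        using w d(2) XY(1) w(1) by (cases l1; cases l2; cases w) (auto simp: matched_def opp_def)
      thus ?thesis
      proof
        assume "matched l1 w"
        thus ?thesis using d(1) w(1)
          by (intro exI[of _ "l1 # z"] exI[of _ \<alpha>] exI[of _ "l2 # \<beta>"] exI[of _ l1] exI[of _ w]) auto
      next
        assume "matched w l2"
        thus ?thesis using d(1) w(1)
          by (intro exI[of _ "z @ [l2]"] exI[of _ "\<alpha> @ [l1]"] exI[of _ \<beta>] exI[of _ w] exI[of _ l2]) auto
      qed
    next
      case nf: False
      with False obtain w1 w2 where "w1 \<in> set z" "w2 \<in> set z" "matched w1 w2" by blast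
      thus ?thesis using d(1)
        by (intro exI[of _ z] exI[of _ "\<alpha> @ [l1]"] exI[of _ "l2 # \<beta>"] exI[of _ w1] exI[of _ w2]) auto
    qed
    then obtain u pre suf x' y' where u: "v = pre @ u @ suf" "length u < length v" "x' \<in> set u" "y' \<in> set u" "matched x' y'"
      by blast
    have "\<forall>x\<in>set u. isX x \<or> isY x" using less.prems(1) u(1) by auto
    from less.hyps[OF u(2) this u(3,4,5)] obtain \<alpha>' l1' z' l2' \<beta>' where
      "u = \<alpha>' @ l1' # z' @ l2' # \<beta>'" "matched l1' l2'" "\<forall>w\<in>set z'. idx w \<noteq> idx l1'"
      "\<forall>w1\<in>set z'. \<forall>w2\<in>set z'. \<not> matched w1 w2" by blast
    thus ?thesis using u(1) by (intro exI[of _ "pre @ \<alpha>'"] exI[of _ l1'] exI[of _ z'] exI[of _ l2'] exI[of _ "\<beta>' @ suf"]) auto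
  qed
qed




definition dz :: "letter list \<Rightarrow> bool" where
  "dz v = (\<forall>i. (\<Sum>l\<leftarrow>v. ldeg l i) = 0)"

lemma sum_filter_split: "(\<Sum>l\<leftarrow>filter P z. f l) + (\<Sum>l\<leftarrow>filter (\<lambda>x. \<not> P x) z. f l) = (\<Sum>l\<leftarrow>z. (f l :: int))"
  by (induction z) auto

lemma matched_deg: "matched x y \<Longrightarrow> ldeg x i + ldeg y i = 0"
  by (cases x; cases y) (auto simp: matched_def opp_def)

lemma sum_list_neg_map: "(\<Sum>l\<leftarrow>v. - f l) = - (\<Sum>l\<leftarrow>v. (f l :: int))"
  by (induction v) auto

lemma ldeg_nonneg: "l \<noteq> Y a \<Longrightarrow> 0 \<le> ldeg l a" by (cases l) auto
lemma ldeg_nonpos: "l \<noteq> X a \<Longrightarrow> ldeg l a \<le> 0" by (cases l) auto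

lemma exists_matched:
  assumes "v \<noteq> []" "\<forall>x\<in>set v. isX x \<or> isY x" "dz v"
  shows "\<exists>x\<in>set v. \<exists>y\<in>set v. matched x y"
proof -
  obtain x where x: "x \<in> set v" using assms(1) by (cases v) auto
  show ?thesis
  proof (cases x)
    case (U j) with assms(2) x show ?thesis by auto
  next
    case (X a)
    show ?thesis
    proof (rule ccontr)
      assume nm: "\<not> ?thesis"
      have nY: "Y a \<notin> set v"
      proof
        assume "Y a \<in> set v"
        with x X have "\<exists>x\<in>set v. \<exists>y\<in>set v. matched x y"
          by (intro bexI[of _ "X a"] bexI[of _ "Y a"]) (auto simp: matched_def opp_def)
        with nm show False by blast
      qed
      have "ldeg x a \<le> (\<Sum>l\<leftarrow>v. ldeg l a)"
      proof (rule member_le_sum_list)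
        show "ldeg x a \<in> set (map (\<lambda>l. ldeg l a) v)" using x by auto
        fix t assume "t \<in> set (map (\<lambda>l. ldeg l a) v)"
        then obtain l where l: "l \<in> set v" "t = ldeg l a" by auto
        thus "t \<ge> 0" using nY ldeg_nonneg[of l a] by auto
      qed
      with assms(3) X show False by (auto simp: dz_def)
    qed
  next
    case (Y a)
    show ?thesis
    proof (rule ccontr)
      assume nm: "\<not> ?thesis"
      have nX: "X a \<notin> set v"
      proof
        assume "X a \<in> set v"
        with x Y have "\<exists>x\<in>set v. \<exists>y\<in>set v. matched x y"
          by (intro bexI[of _ "Y a"] bexI[of _ "X a"]) (auto simp: matched_def opp_def)
        with nm show False by blast
      qed
      have "- ldeg x a \<le> (\<Sum>l\<leftarrow>v. - ldeg l a)"
      proof (rule member_le_sum_list[of "- ldeg x a" "map (\<lambda>l. - ldeg l a) v", simplified])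
        show "- ldeg x a \<in> (\<lambda>l. - ldeg l a) ` set v" using x by auto
        fix t assume "t \<in> (\<lambda>l. - ldeg l a) ` set v"
        then obtain l where l: "l \<in> set v" "t = - ldeg l a" by auto
        thus "t \<ge> 0" using nX ldeg_nonpos[of l a] by auto
      qed
      hence "1 \<le> - (\<Sum>l\<leftarrow>v. ldeg l a)" using Y by (simp add: sum_list_neg_map)
      with assms(3) show False by (auto simp: dz_def)
    qed
  qed
qed

context tgw begin

lemma QP_Nil: "QP []" by (simp add: QP_def)

lemma QP_all: "vl v \<Longrightarrow> dz v \<Longrightarrow> QP v"
proof (induction "length v" arbitrary: v rule: less_induct)
  case less
  show ?case
  proof (cases "\<exists>c. U c \<in> set v")
    case True
    then obtain c where "U c \<in> set v" by blast
    then obtain \<alpha> \<beta> where v: "v = \<alpha> @ U c # \<beta>" using split_list[of "U c" v] by blast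
    have "QP (\<alpha> @ \<beta>)"
      using less.prems v by (intro less.hyps) (auto simp: dz_def)
    thus ?thesis using U_QP less.prems v by blast
  next
    case noU: False
    show ?thesis
    proof (cases "v = []")
      case True thus ?thesis by (simp add: QP_Nil)
    next
      case ne: False
      have XY: "\<forall>x\<in>set v. isX x \<or> isY x"
      proof
        fix x assume "x \<in> set v" with noU show "isX x \<or> isY x" by (cases x) auto
      qed
      obtain x y where "x \<in> set v" "y \<in> set v" "matched x y"
        using exists_matched[OF ne XY less.prems(2)] by blast
      from clean_decomp[OF XY this] obtain \<alpha> l1 z l2 \<beta> where
        d: "v = \<alpha> @ l1 # z @ l2 # \<beta>" "matched l1 l2" "\<forall>w\<in>set z. idx w \<noteq> idx l1"
           "\<forall>w1\<in>set z. \<forall>w2\<in>set z. \<not> matched w1 w2" by blast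
      define P where "P = (if isX l1 then isY else isX)"
      define Z1 where "Z1 = filter P z"
      define Z2 where "Z2 = filter (\<lambda>x. \<not> P x) z"
      have XYz: "\<forall>x\<in>set z. isX x \<or> isY x" "isX l1 \<or> isY l1" "isX l2 \<or> isY l2" using XY d(1) by auto
      have notboth: "\<not> (isX w \<and> isY w)" for w by (cases w) auto
      have Pl2: "P l2" "\<not> P l1" using d(2) notboth by (auto simp: P_def matched_def opp_def)
      have s1: "swap1\<^sup>*\<^sup>* z (Z1 @ Z2)" unfolding Z1_def Z2_def
      proof (rule sort_swaps, intro ballI impI)
        fix a b assume ab: "a \<in> set z" "b \<in> set z" "P a \<and> \<not> P b"
        have "opp b a" using ab XYz(1) notboth Pl2 XYz(2)
          by (auto simp: P_def opp_def split: if_splits)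
        moreover have "\<not> matched b a" using d(4) ab by auto
        ultimately show "opp b a \<and> idx b \<noteq> idx a" by (auto simp: matched_def)
      qed
      have s2: "swap1\<^sup>*\<^sup>* (l1 # Z1) (Z1 @ [l1])"
      proof (rule pass_right, intro ballI)
        fix b assume b: "b \<in> set Z1"
        hence "b \<in> set z" "P b" by (auto simp: Z1_def)
        thus "opp l1 b \<and> idx l1 \<noteq> idx b" using d(3) XYz notboth Pl2
          by (auto simp: P_def opp_def split: if_splits)
      qed
      have s3: "swap1\<^sup>*\<^sup>* (Z2 @ [l2]) (l2 # Z2)"
      proof (rule pass_left, intro ballI)
        fix b assume b: "b \<in> set Z2"
        hence "b \<in> set z" "\<not> P b" by (auto simp: Z2_def)
        moreover have "idx l2 = idx l1" using d(2) by (simp add: matched_def)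
        ultimately show "opp b l2 \<and> idx b \<noteq> idx l2" using d(3) XYz notboth Pl2
          by (auto simp: P_def opp_def split: if_splits)
      qed
      have "swap1\<^sup>*\<^sup>* ((\<alpha> @ [l1]) @ z @ (l2 # \<beta>)) ((\<alpha> @ [l1]) @ (Z1 @ Z2) @ (l2 # \<beta>))"
        by (rule swaps_ctx[OF s1])
      moreover have "swap1\<^sup>*\<^sup>* (\<alpha> @ (l1 # Z1) @ (Z2 @ l2 # \<beta>)) (\<alpha> @ (Z1 @ [l1]) @ (Z2 @ l2 # \<beta>))"
        by (rule swaps_ctx[OF s2])
      moreover have "swap1\<^sup>*\<^sup>* ((\<alpha> @ Z1 @ [l1]) @ (Z2 @ [l2]) @ \<beta>) ((\<alpha> @ Z1 @ [l1]) @ (l2 # Z2) @ \<beta>)"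
        by (rule swaps_ctx[OF s3])
      ultimately have sw: "swap1\<^sup>*\<^sup>* v ((\<alpha> @ Z1) @ [l1, l2] @ (Z2 @ \<beta>))"
        using d(1) by (auto elim!: rtranclp_trans)
      have sub: "set Z1 \<subseteq> set z" "set Z2 \<subseteq> set z" by (auto simp: Z1_def Z2_def)
      have vl2: "vl ((\<alpha> @ Z1) @ [l1, l2] @ (Z2 @ \<beta>))" using less.prems(1) d(1) sub by auto
      have "QP ((\<alpha> @ Z1) @ (Z2 @ \<beta>))"
      proof (rule less.hyps)
        show "length ((\<alpha> @ Z1) @ Z2 @ \<beta>) < length v"
          using d(1) sum_length_filter_compl[of P z] by (simp add: Z1_def Z2_def)
        show "vl ((\<alpha> @ Z1) @ Z2 @ \<beta>)" using vl2 by auto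
        show "dz ((\<alpha> @ Z1) @ Z2 @ \<beta>)" unfolding dz_def
        proof
          fix i
          have "(\<Sum>l\<leftarrow>v. ldeg l i) = 0" using less.prems(2) by (simp add: dz_def)
          thus "(\<Sum>l\<leftarrow>(\<alpha> @ Z1) @ Z2 @ \<beta>. ldeg l i) = 0"
            using d(1) matched_deg[OF d(2), of i] sum_filter_split[where P=P and z=z and f="\<lambda>l. ldeg l i"]
            by (simp add: Z1_def Z2_def)
        qed
      qed
      hence "QP ((\<alpha> @ Z1) @ [l1, l2] @ (Z2 @ \<beta>))" by (rule contract_QP[OF vl2 d(2)])
      thus ?thesis using swaps_QP[OF sw less.prems(1)] by blast
    qed
  qed
qed

lemma edges_interval:
  assumes "idem k" "vl ys" "min A (A + lev k ys) \<le> L" "L < max A (A + lev k ys)"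
  shows "L \<in> edges k A ys"
  using assms(2-4)
proof (induction ys arbitrary: A)
  case Nil thus ?case by simp
next
  case (Cons x xs)
  have s: "step k x = 0 \<or> step k x = 1 \<or> step k x = -1" using step_cases[OF assms(1)] Cons.prems by auto
  show ?case
  proof (cases "min (A + step k x) (A + step k x + lev k xs) \<le> L \<and> L < max (A + step k x) (A + step k x + lev k xs)")
    case True
    hence "L \<in> edges k (A + step k x) xs" using Cons by (intro Cons.IH) auto
    thus ?thesis by simp
  next
    case False
    with Cons.prems s have "step k x \<noteq> 0 \<and> L = min A (A + step k x)" by auto
    thus ?thesis by simp
  qed
qed

lemma bad_word:
  assumes "vl (x @ y @ z)" "dz (x @ y @ z)" "idem k" "\<bar>lev k y\<bar> \<ge> 2"
  shows "mon (x @ y @ z) \<in> JJ"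
proof -
  let ?A = "lev k x"
  let ?L = "min ?A (?A + lev k y)"
  have "?L \<in> edges k ?A y" "?L + 1 \<in> edges k ?A y"
    using assms by (auto intro!: edges_interval)
  hence "?L \<in> edges k 0 (x @ y @ z)" "?L + 1 \<in> edges k 0 (x @ y @ z)"
    by (auto simp: edges_append)
  thus ?thesis using QP_bad[OF QP_all[OF assms(1,2)] assms(3)] by blast
qed

end




section \<open>Components and gradedness\<close>

lemma lookup_component:
  "Poly_Mapping.lookup (component g a) w = (if wdeg w = g then Poly_Mapping.lookup a w else (0::'k::ring_1))"
proof -
  have "Poly_Mapping.lookup (component g a) w =
     (\<Sum>v\<in>{v\<in>Poly_Mapping.keys a. wdeg v = g}. Poly_Mapping.lookup a v when v = w)"
    by (simp add: component_def lookup_sum lookup_single)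
  also have "\<dots> = (\<Sum>v\<in>{v\<in>Poly_Mapping.keys a. wdeg v = g}. if v = w then Poly_Mapping.lookup a v else 0)"
    by (rule sum.cong) (auto simp: when_def)
  also have "\<dots> = (if wdeg w = g then Poly_Mapping.lookup a w else 0)"
    by (auto simp: sum.delta' in_keys_iff)
  finally show ?thesis .
qed

lemma component_add: "component g (a + b) = component g a + component g (b :: ('k::ring_1) free_alg)"
  by (rule poly_mapping_eqI) (simp add: lookup_component lookup_add)

lemma component_zero[simp]: "component g (0 :: ('k::ring_1) free_alg) = 0"
  by (rule poly_mapping_eqI) (simp add: lookup_component)

lemma component_sum: "component g (sum f I) = (\<Sum>i\<in>I. component g (f i :: ('k::ring_1) free_alg))"
  by (induction I rule: infinite_finite_induct) (auto simp: component_add)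

lemma keys_component: "Poly_Mapping.keys (component g a) \<subseteq> Poly_Mapping.keys (a :: ('k::ring_1) free_alg)"
  by (auto simp: in_keys_iff lookup_component split: if_splits)

lemma component_homog: "homog h a \<Longrightarrow> component g a = (if g = h then a else (0 :: ('k::ring_1) free_alg))"
  by (rule poly_mapping_eqI) (auto simp: lookup_component homog_def in_keys_iff)

lemma homog_component: "homog g (component g (a :: ('k::ring_1) free_alg))"
  by (auto simp: homog_def in_keys_iff lookup_component split: if_splits)

lemma component_self: "homog g a \<Longrightarrow> component g a = (a :: ('k::ring_1) free_alg)"
  by (simp add: component_homog)

lemma comp_expansion: "(a :: ('k::ring_1) free_alg) = (\<Sum>h\<in>wdeg ` Poly_Mapping.keys a. component h a)"
proof (rule poly_mapping_eqI)
  fix w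
  have "Poly_Mapping.lookup (\<Sum>h\<in>wdeg ` Poly_Mapping.keys a. component h a) w
     = (\<Sum>h\<in>wdeg ` Poly_Mapping.keys a. if wdeg w = h then Poly_Mapping.lookup a w else 0)"
    by (simp add: lookup_sum lookup_component)
  also have "\<dots> = Poly_Mapping.lookup a w"
    by (cases "w \<in> Poly_Mapping.keys a") (auto simp: sum.delta in_keys_iff)
  finally show "Poly_Mapping.lookup a w = Poly_Mapping.lookup (\<Sum>h\<in>wdeg ` Poly_Mapping.keys a. component h a) w" ..
qed

lemma wdeg_plus: "wdeg (v + w) = (\<lambda>k. wdeg v k + wdeg w k)"
  by (simp add: wdeg_def)

lemma homog_mult: "homog g a \<Longrightarrow> homog h b \<Longrightarrow> (\<lambda>k. g k + h k) = d \<Longrightarrow> homog d (a * (b :: ('k::ring_1) free_alg))"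
  using keys_mult[of a b] by (fastforce simp: homog_def wdeg_plus)

lemma homog_add: "homog g a \<Longrightarrow> homog g b \<Longrightarrow> homog g (a + (b :: ('k::ring_1) free_alg))"
  using keys_add[of a b] by (auto simp: homog_def)

lemma homog_uminus: "homog g a \<Longrightarrow> homog g (- (a :: ('k::ring_1) free_alg))"
  by (auto simp: homog_def)

lemma homog_diff: "homog g a \<Longrightarrow> homog g b \<Longrightarrow> homog g (a - (b :: ('k::ring_1) free_alg))"
  using homog_add[of g a "- b"] homog_uminus[of g b] by simp

lemma homog_const: "homog (\<lambda>k. 0) (const c :: ('k::ring_1) free_alg)"
  by (simp add: homog_def const_def wdeg_def zero_word_def)

lemma homog_lt: "homog (ldeg l) (lt l :: ('k::ring_1) free_alg)"
  by (simp add: homog_def lt_def wdeg_def)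

lemma sum_U: "\<forall>l\<in>set xs. \<exists>j. l = U j \<Longrightarrow> (\<Sum>l\<leftarrow>xs. ldeg l k) = 0"
  by (induction xs) auto

lemma homog_RF: "r \<in> Rfree n \<Longrightarrow> homog (\<lambda>k. 0) (r :: ('k::ring_1) free_alg)"
proof -
  assume r: "r \<in> Rfree n"
  { fix w assume "w \<in> Poly_Mapping.keys r"
    with r have "\<forall>l\<in>set (word_list w). \<exists>j. l = U j" by (auto simp: Rfree_def)
    hence "wdeg w = (\<lambda>k. 0)" unfolding wdeg_def using sum_U by auto }
  thus ?thesis by (auto simp: homog_def)
qed

lemma ig_graded:
  assumes S: "S \<subseteq> Fset n m" and H: "\<And>s. s \<in> S \<Longrightarrow> \<exists>h. homog h s"
  shows "a \<in> ideal_gen n m S \<Longrightarrow> component g a \<in> ideal_gen n m (S :: ('k::comm_ring_1) free_alg set)"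
proof (induction arbitrary: g rule: ideal_gen.induct)
  case (gen a)
  then obtain h where "homog h a" using H by blast
  thus ?case using gen by (auto simp: component_homog intro: ideal_gen.gen ideal_gen.zero)
next
  case zero thus ?case by (simp add: ideal_gen.zero)
next
  case (add a b) thus ?case by (simp add: component_add ideal_gen.add)
next
  case (mult a x y)
  let ?H1 = "wdeg ` Poly_Mapping.keys x" and ?H2 = "wdeg ` Poly_Mapping.keys a" and ?H3 = "wdeg ` Poly_Mapping.keys y"
  have "x * a * y = (\<Sum>h1\<in>?H1. component h1 x) * (\<Sum>h2\<in>?H2. component h2 a) * (\<Sum>h3\<in>?H3. component h3 y)"
    by (metis comp_expansion)
  also have "\<dots> = (\<Sum>h1\<in>?H1. \<Sum>h2\<in>?H2. component h1 x * component h2 a) * (\<Sum>h3\<in>?H3. component h3 y)"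
    by (simp only: sum_product)
  also have "\<dots> = (\<Sum>h1\<in>?H1. (\<Sum>h2\<in>?H2. component h1 x * component h2 a) * (\<Sum>h3\<in>?H3. component h3 y))"
    by (rule sum_distrib_right)
  also have "\<dots> = (\<Sum>h1\<in>?H1. \<Sum>h2\<in>?H2. \<Sum>h3\<in>?H3. component h1 x * component h2 a * component h3 y)"
    by (simp only: sum_product)
  finally have eq: "component g (x * a * y) = (\<Sum>h1\<in>?H1. \<Sum>h2\<in>?H2. \<Sum>h3\<in>?H3. component g (component h1 x * component h2 a * component h3 y))"
    by (simp add: component_sum)
  have FX: "component h x \<in> Fset n m" "component h y \<in> Fset n m" for h
    using mult(2,3) LS_keys_sub[OF _ keys_component] unfolding Fset_LS by blast+
  show ?case unfolding eq
  proof (intro ig_sum)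
    fix h1 h2 h3
    let ?t = "component h1 x * component h2 a * component h3 y"
    have "homog (\<lambda>k. h1 k + h2 k + h3 k) ?t"
      by (rule homog_mult[OF homog_mult]) (auto simp: homog_component)
    hence "component g ?t = (if g = (\<lambda>k. h1 k + h2 k + h3 k) then ?t else 0)" by (rule component_homog)
    moreover have "?t \<in> ideal_gen n m S" using mult FX by (intro ideal_gen.mult) auto
    ultimately show "component g ?t \<in> ideal_gen n m S" by (simp add: ideal_gen.zero)
  qed
qed




context tgw begin

lemma homog_mult': "homog g a \<Longrightarrow> homog h b \<Longrightarrow> homog (\<lambda>k. g k + h k) (a * (b :: 'k free_alg))"
  by (rule homog_mult) auto

lemma rels_homog: "s \<in> rels p q m eps \<gamma> \<Longrightarrow> \<exists>h. homog h (s :: 'k free_alg)"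
proof -
  assume s: "s \<in> rels p q m eps \<gamma>"
  have hU: "homog (\<lambda>k. 0) (lt (U j) :: 'k free_alg)" for j using homog_lt[of "U j"] by simp
  have hR: "homog (\<lambda>k. 0) r" if "r \<in> RF" for r :: "'k free_alg" using homog_RF that by blast
  have z: "homog (\<lambda>k. 0) (a * b)" if "homog (\<lambda>k. 0) a" "homog (\<lambda>k. 0) b" for a b :: "'k free_alg"
    using homog_mult'[OF that] by simp
  have hX: "homog (ldeg (X i)) (lt (X i) :: 'k free_alg)" for i by (rule homog_lt)
  have hY: "homog (ldeg (Y i)) (lt (Y i) :: 'k free_alg)" for i by (rule homog_lt)
  have r1: "homog (ldeg l) (lt l * r)" "homog (ldeg l) (r * lt l)" if "homog (\<lambda>k. 0) r" for r :: "'k free_alg" and l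
    using homog_mult'[OF homog_lt that] homog_mult'[OF that homog_lt] by simp_all
  have YX: "homog (\<lambda>k. 0) (lt (Y i) * lt (X i) :: 'k free_alg)" "homog (\<lambda>k. 0) (lt (X i) * lt (Y i) :: 'k free_alg)" for i
    by (rule homog_mult[OF hY hX], simp add: fun_eq_iff, rule homog_mult[OF hX hY], simp add: fun_eq_iff)
  have XYc: "homog (\<lambda>k. ldeg (X i) k + ldeg (Y j) k) (const c * lt (Y j) * lt (X i) :: 'k free_alg)" for i j c
    by (rule homog_mult[OF homog_mult'[OF homog_const hY] hX]) (simp add: fun_eq_iff)
  from s show ?thesis unfolding rels_def
    by (elim UnE CollectE exE conjE; (intro exI homog_diff z hU r1 hR sigma_RF sigma_inv_RF tt_RF
          homog_mult' hX hY XYc YX)?; auto intro!: homog_diff z hU hR r1 sigma_RF sigma_inv_RF tt_RF YX XYc homog_mult' hX hY)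
qed

lemma J_graded: "a \<in> JJ \<Longrightarrow> component g a \<in> (JJ :: 'k free_alg set)"
  unfolding Jrel_def by (rule ig_graded[OF rels_FS rels_homog])

section \<open>The graded ideal witnessing vanishing\<close>

definition Dset :: "letter word set" where
  "Dset = {w. vl (word_list w) \<and> (\<exists>x y z k. word_list w = x @ y @ z \<and> idem k \<and> \<bar>lev k y\<bar> \<ge> 2)}"

definition KK :: "'k free_alg set" where
  "KK = {a. a \<in> FS \<and> (\<exists>b c. b \<in> JJ \<and> a = b + c \<and> Poly_Mapping.keys c \<subseteq> Dset)}"

lemma Dset_left: "v \<in> Poly_Mapping.keys (x :: 'k free_alg) \<Longrightarrow> x \<in> FS \<Longrightarrow> w \<in> Dset \<Longrightarrow> v + w \<in> Dset"
  unfolding Dset_def Fset_def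
  by (auto, metis append.assoc)

lemma Dset_right: "v \<in> Poly_Mapping.keys (x :: 'k free_alg) \<Longrightarrow> x \<in> FS \<Longrightarrow> w \<in> Dset \<Longrightarrow> w + v \<in> Dset"
  unfolding Dset_def Fset_def
  by (auto, metis append.assoc)

lemma KK_ideal: "is_ideal (p+q) m KK"
  unfolding is_ideal_def
proof (intro conjI ballI)
  show "KK \<subseteq> FS" by (auto simp: KK_def)
  show "0 \<in> KK" by (auto simp: KK_def J_zero Fset_LS LS_zero intro!: exI[of _ 0])
  fix a assume a: "a \<in> KK"
  then obtain b c where bc: "b \<in> JJ" "a = b + c" "Poly_Mapping.keys c \<subseteq> Dset" "a \<in> FS" by (auto simp: KK_def)
  { fix a' assume "a' \<in> KK"
    then obtain b' c' where bc': "b' \<in> JJ" "a' = b' + c'" "Poly_Mapping.keys c' \<subseteq> Dset" "a' \<in> FS" by (auto simp: KK_def)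
    show "a + a' \<in> KK" unfolding KK_def
    proof (intro CollectI conjI exI)
      show "a + a' \<in> FS" using bc bc' by (intro FS_add)
      show "b + b' \<in> JJ" using bc bc' by (intro J_add)
      show "a + a' = (b + b') + (c + c')" using bc bc' by (simp add: algebra_simps)
      show "Poly_Mapping.keys (c + c') \<subseteq> Dset" using bc bc' keys_add[of c c'] by blast
    qed }
  fix x assume x: "x \<in> FS"
  show "x * a \<in> KK" unfolding KK_def
  proof (intro CollectI conjI exI)
    show "x * a \<in> FS" using x bc by (intro FS_mult)
    show "x * b \<in> JJ" using x bc by (intro J_left)
    show "x * a = x * b + x * c" using bc by (simp add: algebra_simps)
    show "Poly_Mapping.keys (x * c) \<subseteq> Dset" using keys_mult[of x c] bc(3) Dset_left[OF _ x] by blast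
  qed
  show "a * x \<in> KK" unfolding KK_def
  proof (intro CollectI conjI exI)
    show "a * x \<in> FS" using x bc by (intro FS_mult)
    show "b * x \<in> JJ" using x bc by (intro J_right)
    show "a * x = b * x + c * x" using bc by (simp add: algebra_simps)
    show "Poly_Mapping.keys (c * x) \<subseteq> Dset" using keys_mult[of c x] bc(3) Dset_right[OF _ x] by blast
  qed
qed

lemma KK_graded: "graded KK"
  unfolding graded_def
proof (intro ballI allI)
  fix a g assume a: "a \<in> KK"
  then obtain b c where bc: "b \<in> JJ" "a = b + c" "Poly_Mapping.keys c \<subseteq> Dset" "a \<in> FS" by (auto simp: KK_def)
  show "component g a \<in> KK" unfolding KK_def
  proof (intro CollectI conjI exI)
    show "component g a \<in> FS" using bc(4) LS_keys_sub[OF _ keys_component] by (auto simp: Fset_LS)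
    show "component g b \<in> JJ" using bc by (intro J_graded)
    show "component g a = component g b + component g c" using bc by (simp add: component_add)
    show "Poly_Mapping.keys (component g c) \<subseteq> Dset" using keys_component[of g c] bc(3) by blast
  qed
qed

lemma J_KK: "JJ \<subseteq> KK"
proof
  fix x :: "'k free_alg" assume x: "x \<in> JJ"
  show "x \<in> KK" unfolding KK_def
  proof (intro CollectI conjI exI)
    show "x \<in> FS" using x by (rule J_FS)
    show "x \<in> JJ" by fact
    show "x = x + 0" by simp
    show "Poly_Mapping.keys (0 :: 'k free_alg) \<subseteq> Dset" by simp
  qed
qed

lemma dz_wdeg: "wdeg w = (\<lambda>k. 0) \<Longrightarrow> dz (word_list w)"
  by (simp add: dz_def wdeg_def fun_eq_iff)

lemma KK_zero: "a \<in> KK \<Longrightarrow> homog (\<lambda>k. 0) a \<Longrightarrow> a \<in> JJ"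
proof -
  assume a: "a \<in> KK" and h: "homog (\<lambda>k. 0) a"
  then obtain b c where bc: "b \<in> JJ" "a = b + c" "Poly_Mapping.keys c \<subseteq> Dset" by (auto simp: KK_def)
  have "a = component (\<lambda>k. 0) b + component (\<lambda>k. 0) c"
    using component_self[OF h] bc(2) by (simp add: component_add)
  moreover have "component (\<lambda>k. 0) b \<in> JJ" using bc by (intro J_graded)
  moreover have "component (\<lambda>k. 0) c \<in> JJ" unfolding component_def
  proof (intro J_sum)
    fix w assume w: "w \<in> {w \<in> Poly_Mapping.keys c. wdeg w = (\<lambda>k. 0)}"
    hence wD: "w \<in> Dset" using bc(3) by auto
    then obtain x y z k where xyz: "word_list w = x @ y @ z" "idem k" "\<bar>lev k y\<bar> \<ge> 2" "vl (word_list w)"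
      by (auto simp: Dset_def)
    have "mon (word_list w) \<in> JJ"
      using bad_word[of x y z k] xyz dz_wdeg[of w] w by auto
    hence "const (Poly_Mapping.lookup c w) * mon (word_list w) \<in> JJ" by (rule J_const)
    thus "Poly_Mapping.single w (Poly_Mapping.lookup c w) \<in> JJ"
      by (simp add: const_def mon_def mult_single)
  qed
  ultimately show ?thesis by (simp add: J_add)
qed

lemma KK_Imax: "KK \<subseteq> Imax p q m eps \<gamma>"
proof
  fix a assume a: "a \<in> KK"
  have "KK \<in> {K. is_ideal (p+q) m K \<and> graded K \<and> JJ \<subseteq> K \<and> (\<forall>a\<in>K. homog (\<lambda>k. 0) a \<longrightarrow> a \<in> JJ)}"
    using KK_ideal KK_graded J_KK KK_zero by blast
  with a show "a \<in> Imax p q m eps \<gamma>" unfolding Imax_def by (intro ideal_gen.gen) blast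
qed

lemma lev_wdeg: "vl xs \<Longrightarrow> lev k xs = (\<Sum>i=1..m. \<gamma> k i * (\<Sum>l\<leftarrow>xs. ldeg l i))"
proof (induction xs)
  case Nil thus ?case by simp
next
  case (Cons x xs)
  have "(\<Sum>i=1..m. \<gamma> k i * ldeg x i) = step k x"
    using Cons.prems by (cases x) (auto simp: valid_letter_def if_distrib sum.delta cong: if_cong)
  thus ?case using Cons by (simp add: distrib_left sum.distrib)
qed

lemma support_bound:
  assumes g: "g \<in> tgw_support TYPE('k) p q m eps \<gamma>" and k: "idem k"
  shows "\<bar>\<Sum>i=1..m. \<gamma> k i * g i\<bar> \<le> 1"
proof (rule ccontr)
  assume bad: "\<not> ?thesis"
  obtain a :: "'k free_alg" where a: "a \<in> FS" "homog g a" "a \<notin> Imax p q m eps \<gamma>"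
    using g by (auto simp: tgw_support_def)
  have "a \<in> KK" unfolding KK_def
  proof (intro CollectI conjI exI)
    show "a \<in> FS" by fact
    show "(0 :: 'k free_alg) \<in> JJ" by (rule J_zero)
    show "a = 0 + a" by simp
    show "Poly_Mapping.keys a \<subseteq> Dset"
    proof
      fix w assume w: "w \<in> Poly_Mapping.keys a"
      have vw: "vl (word_list w)" using a(1) w by (auto simp: Fset_def)
      have "wdeg w = g" using a(2) w by (auto simp: homog_def)
      hence gi: "g i = (\<Sum>l\<leftarrow>word_list w. ldeg l i)" for i by (auto simp: wdeg_def)
      have "lev k (word_list w) = (\<Sum>i=1..m. \<gamma> k i * g i)"
        using lev_wdeg[OF vw] by (simp add: gi)
      with bad have "\<bar>lev k (word_list w)\<bar> \<ge> 2" by simp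
      thus "w \<in> Dset" unfolding Dset_def using vw k
        by (intro CollectI conjI exI[of _ "[]"] exI[of _ "word_list w"] exI[of _ "[]"] exI[of _ k]) auto
    qed
  qed
  with KK_Imax a(3) show False by blast
qed

end


theorem mainTheorem7:
  fixes p q m :: nat and eps :: int and \<gamma> :: "nat \<Rightarrow> nat \<Rightarrow> int"
  assumes "eps = 1 \<or> eps = -1"
  assumes "gamma_ok p q m eps \<gamma>"
  shows "\<forall>g\<in>tgw_support TYPE('k::{alg_closed_field, field_char_0}) p q m eps \<gamma>.
           (eps = 1 \<longrightarrow> (\<forall>j. 1 \<le> j \<and> j \<le> p \<longrightarrow> \<bar>\<Sum>i=1..m. \<gamma> j i * g i\<bar> \<le> 1)) \<and>
           (eps = -1 \<longrightarrow> (\<forall>j. p < j \<and> j \<le> p+q \<longrightarrow> \<bar>\<Sum>i=1..m. \<gamma> j i * g i\<bar> \<le> 1))"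
proof -
  interpret T: tgw "TYPE('k)" p q m eps \<gamma> using assms by unfold_locales
  show ?thesis
  proof (intro ballI conjI impI allI)
    fix g j
    assume g: "g \<in> tgw_support TYPE('k) p q m eps \<gamma>" and e: "eps = 1" and j: "1 \<le> j \<and> j \<le> p"
    have "T.idem j" unfolding T.idem_def using e j by (auto simp: lam_def par_def)
    thus "\<bar>\<Sum>i=1..m. \<gamma> j i * g i\<bar> \<le> 1" using T.support_bound[OF g] by blast
  next
    fix g j
    assume g: "g \<in> tgw_support TYPE('k) p q m eps \<gamma>" and e: "eps = -1" and j: "p < j \<and> j \<le> p+q"
    have "T.idem j" unfolding T.idem_def using e j by (auto simp: lam_def par_def)
    thus "\<bar>\<Sum>i=1..m. \<gamma> j i * g i\<bar> \<le> 1" using T.support_bound[OF g] by blast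
  qed
qed

end
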